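(* Let $\mathcal{F},\mathcal{G}:(\mathcal{K},c)\to\mathcal{K}'$ be bilax functors and $b:A\to A$ a $c$-bimonad in $\mathcal{K}$ with structure $(\mu,\eta,\Delta,\varepsilon)$. (i) If $\phi:\mathcal{F}\Rightarrow\mathcal{G}$ is a colax natural transformation of colax functors, then $\lambda:=(\mathcal{G}(\eta)\circ1_{\phi_A})\cdot\phi_{\mathrm{id}_A}\cdot(1_{\phi_A}\circ\mathcal{F}^0_A):\phi_A\Rightarrow\mathcal{G}(b)\circ\phi_A$ makes $\phi_A$ a left comodule over the comonad $\mathcal{G}(b)$ with comultiplication $\mathcal{G}_{2;b,b}\cdot\mathcal{G}(\Delta)$ and counit $\mathcal{G}_{0;A}\cdot\mathcal{G}(\varepsilon)$. (ii) Dually, if $\psi:\mathcal{F}\Rightarrow\mathcal{G}$ is a lax natural transformation of lax functors, then $\rhd:=(1_{\psi_A}\circ\mathcal{F}_{0;A})\cdot\psi_{\mathrm{id}_A}\cdot(\mathcal{G}(\varepsilon)\circ1_{\psi_A}):\mathcal{G}(b)\circ\psi_A\Rightarrow\psi_A$ makes $\psi_A$ a left module over the monad $\mathcal{G}(b)$ with multiplication $\mathcal{G}(\mu)\cdot\mathcal{G}^2_{b,b}$ and unit $\mathcal{G}(\eta)\cdot\mathcal{G}^0_A$.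
   Context: Conventions: $\circ$ horizontal composition, $\cdot$ vertical composition ($\beta\cdot\alpha$: first $\alpha$), $1$ identity 2-cells. A bilax functor $(\mathcal{F},\nu):(\mathcal{K},c)\to\mathcal{K}'$ (where $c$ is a Yang–Baxter operator of $\mathcal{K}$, i.e. natural 2-cells $c_{g,f}:g\circ f\Rightarrow f\circ g$ for 1-endocells satisfying the Yang–Baxter equation and $c_{\mathrm{id},f}=c_{f,\mathrm{id}}=1$) is simultaneously a lax functor (structure $\mathcal{F}^2_{g,f}:\mathcal{F}(g)\circ\mathcal{F}(f)\Rightarrow\mathcal{F}(gf)$, $\mathcal{F}^0_A:\mathrm{id}\Rightarrow\mathcal{F}(\mathrm{id}_A)$) and a colax functor (structure $\mathcal{F}_{2;g,f}:\mathcal{F}(gf)\Rightarrow\mathcal{F}(g)\circ\mathcal{F}(f)$, $\mathcal{F}_{0;A}:\mathcal{F}(\mathrm{id}_A)\Rightarrow\mathrm{id}$) with a Yang–Baxter operator $\nu$ satisfying the distributive-law and bilaxity axioms; in particular $\mathcal{F}^0_A\circ\mathcal{F}^0_A=\mathcal{F}_{2;\mathrm{id},\mathrm{id}}\cdot\mathcal{F}^0_A$, $\mathcal{F}_{0;A}\circ\mathcal{F}_{0;A}=\mathcal{F}_{0;A}\cdot\mathcal{F}^2_{\mathrm{id},\mathrm{id}}$, $\mathcal{F}_{0;A}\cdot\mathcal{F}^0_A=1$. A $c$-bimonad $b$ is a 1-endocell with monad $(\mu,\eta)$ and comonad $(\Delta,\varepsilon)$ such that $c_{b,b}$ is a left and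 right distributive law for both, $(\mu\circ\mu)\cdot(1\circ c_{b,b}\circ1)\cdot(\Delta\circ\Delta)=\Delta\cdot\mu$, $\varepsilon\circ\varepsilon=\varepsilon\cdot\mu$, $\eta\circ\eta=\Delta\cdot\eta$, $\varepsilon\cdot\eta=1$. A colax natural transformation $\phi:\mathcal{F}\Rightarrow\mathcal{G}$ of colax functors: 1-cells $\phi_A:\mathcal{F}(A)\to\mathcal{G}(A)$ and 2-cells $\phi_f:\phi_B\circ\mathcal{F}(f)\Rightarrow\mathcal{G}(f)\circ\phi_A$ natural in $f$ with $(\mathcal{G}_{2;g,f}\circ1)\cdot\phi_{gf}=(1\circ\phi_f)\cdot(\phi_g\circ1)\cdot(1\circ\mathcal{F}_{2;g,f})$ and $(\mathcal{G}_{0;A}\circ1)\cdot\phi_{\mathrm{id}_A}=1\circ\mathcal{F}_{0;A}$. A lax natural transformation $\psi:\mathcal{F}\Rightarrow\mathcal{G}$ of lax functors: 2-cells $\psi_f:\mathcal{G}(f)\circ\psi_A\Rightarrow\psi_B\circ\mathcal{F}(f)$ natural with $\psi_{gf}\cdot(\mathcal{G}^2_{g,f}\circ1)=(1\circ\mathcal{F}^2_{g,f})\cdot(\psi_g\circ1)\cdot(1\circ\psi_f)$ and $\psi_{\mathrm{id}_A}\cdot(\mathcal{G}^0_A\circ1)=1\circ\mathcal{F}^0_A$. A left comodule over a comonad $(d,\Delta_d,\varepsilon_d)$ on $A$ is a 1-cell $x$ into $A$ with $\lambda:x\Rightarrow d\circ x$ such that $(\Delta_d\circ1)\cdot\lambda=(1\circ\lambda)\cdot\lambda$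 and $(\varepsilon_d\circ1)\cdot\lambda=1$; left modules over monads are defined dually. *)

theory Defs
  imports Main
begin

text \<open>A strict 2-category with object carrier Ob, 1-cell carrier Ar, 2-cell carrier Ce.
  cmp K g f is the horizontal composite g o f (f first), vc K b a is the vertical
  composite b . a (a first), hc K b a is the horizontal composite of 2-cells.\<close>

record ('o,'a,'c) cat2 =
  Ob :: "'o set"
  Ar :: "'a set"
  Ce :: "'c set"
  src :: "'a \<Rightarrow> 'o"
  trg :: "'a \<Rightarrow> 'o"
  idn :: "'o \<Rightarrow> 'a"
  cmp :: "'a \<Rightarrow> 'a \<Rightarrow> 'a"
  dom2 :: "'c \<Rightarrow> 'a"
  cod2 :: "'c \<Rightarrow> 'a"
  vc :: "'c \<Rightarrow> 'c \<Rightarrow> 'c"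
  hc :: "'c \<Rightarrow> 'c \<Rightarrow> 'c"
  id2 :: "'a \<Rightarrow> 'c"

definition hom1 :: "('o,'a,'c) cat2 \<Rightarrow> 'o \<Rightarrow> 'o \<Rightarrow> 'a set" where
  "hom1 K A B = {f \<in> Ar K. src K f = A \<and> trg K f = B}"

definition hom2 :: "('o,'a,'c) cat2 \<Rightarrow> 'a \<Rightarrow> 'a \<Rightarrow> 'c set" where
  "hom2 K f g = {\<alpha> \<in> Ce K. dom2 K \<alpha> = f \<and> cod2 K \<alpha> = g}"

definition endo :: "('o,'a,'c) cat2 \<Rightarrow> 'o \<Rightarrow> 'a \<Rightarrow> bool" where
  "endo K A f \<longleftrightarrow> f \<in> hom1 K A A"

definition strict_2cat :: "('o,'a,'c) cat2 \<Rightarrow> bool" where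
  "strict_2cat K \<longleftrightarrow>
    (\<forall>f \<in> Ar K. src K f \<in> Ob K \<and> trg K f \<in> Ob K) \<and>
    (\<forall>A \<in> Ob K. idn K A \<in> hom1 K A A) \<and>
    (\<forall>A B C f g. f \<in> hom1 K A B \<longrightarrow> g \<in> hom1 K B C \<longrightarrow> cmp K g f \<in> hom1 K A C) \<and>
    (\<forall>A B C D f g h. f \<in> hom1 K A B \<longrightarrow> g \<in> hom1 K B C \<longrightarrow> h \<in> hom1 K C D \<longrightarrow>
        cmp K h (cmp K g f) = cmp K (cmp K h g) f) \<and>
    (\<forall>A B f. f \<in> hom1 K A B \<longrightarrow> cmp K (idn K B) f = f \<and> cmp K f (idn K A) = f) \<and>
    (\<forall>\<alpha> \<in> Ce K. \<exists>A B. dom2 K \<alpha> \<in> hom1 K A B \<and> cod2 K \<alpha> \<in> hom1 K A B) \<and>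
    (\<forall>f \<in> Ar K. id2 K f \<in> hom2 K f f) \<and>
    (\<forall>f g h \<alpha> \<beta>. \<alpha> \<in> hom2 K f g \<longrightarrow> \<beta> \<in> hom2 K g h \<longrightarrow> vc K \<beta> \<alpha> \<in> hom2 K f h) \<and>
    (\<forall>f g h k \<alpha> \<beta> \<gamma>. \<alpha> \<in> hom2 K f g \<longrightarrow> \<beta> \<in> hom2 K g h \<longrightarrow> \<gamma> \<in> hom2 K h k \<longrightarrow>
        vc K \<gamma> (vc K \<beta> \<alpha>) = vc K (vc K \<gamma> \<beta>) \<alpha>) \<and>
    (\<forall>f g \<alpha>. \<alpha> \<in> hom2 K f g \<longrightarrow> vc K (id2 K g) \<alpha> = \<alpha> \<and> vc K \<alpha> (id2 K f) = \<alpha>) \<and>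
    (\<forall>A B C f f' g g' \<alpha> \<beta>. f \<in> hom1 K A B \<longrightarrow> f' \<in> hom1 K A B \<longrightarrow>
        g \<in> hom1 K B C \<longrightarrow> g' \<in> hom1 K B C \<longrightarrow> \<alpha> \<in> hom2 K f f' \<longrightarrow> \<beta> \<in> hom2 K g g' \<longrightarrow>
        hc K \<beta> \<alpha> \<in> hom2 K (cmp K g f) (cmp K g' f')) \<and>
    (\<forall>A B C D f f' g g' h h' \<alpha> \<beta> \<gamma>. f \<in> hom1 K A B \<longrightarrow> f' \<in> hom1 K A B \<longrightarrow>
        g \<in> hom1 K B C \<longrightarrow> g' \<in> hom1 K B C \<longrightarrow> h \<in> hom1 K C D \<longrightarrow> h' \<in> hom1 K C D \<longrightarrow>
        \<alpha> \<in> hom2 K f f' \<longrightarrow> \<beta> \<in> hom2 K g g' \<longrightarrow> \<gamma> \<in> hom2 K h h' \<longrightarrow>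
        hc K \<gamma> (hc K \<beta> \<alpha>) = hc K (hc K \<gamma> \<beta>) \<alpha>) \<and>
    (\<forall>A B f f' \<alpha>. f \<in> hom1 K A B \<longrightarrow> f' \<in> hom1 K A B \<longrightarrow> \<alpha> \<in> hom2 K f f' \<longrightarrow>
        hc K (id2 K (idn K B)) \<alpha> = \<alpha> \<and> hc K \<alpha> (id2 K (idn K A)) = \<alpha>) \<and>
    (\<forall>A B C f g. f \<in> hom1 K A B \<longrightarrow> g \<in> hom1 K B C \<longrightarrow>
        hc K (id2 K g) (id2 K f) = id2 K (cmp K g f)) \<and>
    (\<forall>A B C f f' f'' g g' g'' \<alpha> \<alpha>' \<beta> \<beta>'.
        f \<in> hom1 K A B \<longrightarrow> f' \<in> hom1 K A B \<longrightarrow> f'' \<in> hom1 K A B \<longrightarrow>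
        g \<in> hom1 K B C \<longrightarrow> g' \<in> hom1 K B C \<longrightarrow> g'' \<in> hom1 K B C \<longrightarrow>
        \<alpha> \<in> hom2 K f f' \<longrightarrow> \<alpha>' \<in> hom2 K f' f'' \<longrightarrow> \<beta> \<in> hom2 K g g' \<longrightarrow> \<beta>' \<in> hom2 K g' g'' \<longrightarrow>
        hc K (vc K \<beta>' \<beta>) (vc K \<alpha>' \<alpha>) = vc K (hc K \<beta>' \<alpha>') (hc K \<beta> \<alpha>))"

definition yb_operator :: "('o,'a,'c) cat2 \<Rightarrow> ('a \<Rightarrow> 'a \<Rightarrow> 'c) \<Rightarrow> bool" where
  "yb_operator K c \<longleftrightarrow>
    (\<forall>A \<in> Ob K. \<forall>f g. endo K A f \<longrightarrow> endo K A g \<longrightarrow>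
        c g f \<in> hom2 K (cmp K g f) (cmp K f g)) \<and>
    (\<forall>A \<in> Ob K. \<forall>f f' g g' \<alpha> \<beta>. endo K A f \<longrightarrow> endo K A f' \<longrightarrow> endo K A g \<longrightarrow> endo K A g' \<longrightarrow>
        \<alpha> \<in> hom2 K f f' \<longrightarrow> \<beta> \<in> hom2 K g g' \<longrightarrow>
        vc K (c g' f') (hc K \<beta> \<alpha>) = vc K (hc K \<alpha> \<beta>) (c g f)) \<and>
    (\<forall>A \<in> Ob K. \<forall>f g h. endo K A f \<longrightarrow> endo K A g \<longrightarrow> endo K A h \<longrightarrow>
        vc K (hc K (id2 K f) (c h g)) (vc K (hc K (c h f) (id2 K g)) (hc K (id2 K h) (c g f)))
      = vc K (hc K (c g f) (id2 K h)) (vc K (hc K (id2 K g) (c h f)) (hc K (c h g) (id2 K f)))) \<and>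
    (\<forall>A \<in> Ob K. \<forall>f. endo K A f \<longrightarrow> c (idn K A) f = id2 K f \<and> c f (idn K A) = id2 K f)"

definition monad2 :: "('o,'a,'c) cat2 \<Rightarrow> 'o \<Rightarrow> 'a \<Rightarrow> 'c \<Rightarrow> 'c \<Rightarrow> bool" where
  "monad2 K A b \<mu> \<eta> \<longleftrightarrow> A \<in> Ob K \<and> endo K A b \<and>
    \<mu> \<in> hom2 K (cmp K b b) b \<and> \<eta> \<in> hom2 K (idn K A) b \<and>
    vc K \<mu> (hc K \<mu> (id2 K b)) = vc K \<mu> (hc K (id2 K b) \<mu>) \<and>
    vc K \<mu> (hc K \<eta> (id2 K b)) = id2 K b \<and> vc K \<mu> (hc K (id2 K b) \<eta>) = id2 K b"

definition comonad2 :: "('o,'a,'c) cat2 \<Rightarrow> 'o \<Rightarrow> 'a \<Rightarrow> 'c \<Rightarrow> 'c \<Rightarrow> bool" where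
  "comonad2 K A b \<Delta> \<epsilon> \<longleftrightarrow> A \<in> Ob K \<and> endo K A b \<and>
    \<Delta> \<in> hom2 K b (cmp K b b) \<and> \<epsilon> \<in> hom2 K b (idn K A) \<and>
    vc K (hc K \<Delta> (id2 K b)) \<Delta> = vc K (hc K (id2 K b) \<Delta>) \<Delta> \<and>
    vc K (hc K \<epsilon> (id2 K b)) \<Delta> = id2 K b \<and> vc K (hc K (id2 K b) \<epsilon>) \<Delta> = id2 K b"

text \<open>c_{b,b} as a left and right distributive law for the monad and for the comonad b
  (the equations a braiding would give).\<close>
definition c_bimonad :: "('o,'a,'c) cat2 \<Rightarrow> ('a \<Rightarrow> 'a \<Rightarrow> 'c) \<Rightarrow> 'o \<Rightarrow> 'a \<Rightarrow>
    'c \<Rightarrow> 'c \<Rightarrow> 'c \<Rightarrow> 'c \<Rightarrow> bool" where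
  "c_bimonad K c A b \<mu> \<eta> \<Delta> \<epsilon> \<longleftrightarrow>
    monad2 K A b \<mu> \<eta> \<and> comonad2 K A b \<Delta> \<epsilon> \<and>
    (let i = id2 K b; cb = c b b in
      vc K cb (hc K \<mu> i) = vc K (hc K i \<mu>) (vc K (hc K cb i) (hc K i cb)) \<and>
      vc K cb (hc K \<eta> i) = hc K i \<eta> \<and>
      vc K cb (hc K i \<mu>) = vc K (hc K \<mu> i) (vc K (hc K i cb) (hc K cb i)) \<and>
      vc K cb (hc K i \<eta>) = hc K \<eta> i \<and>
      vc K (hc K \<Delta> i) cb = vc K (hc K i cb) (vc K (hc K cb i) (hc K i \<Delta>)) \<and>
      vc K (hc K \<epsilon> i) cb = hc K i \<epsilon> \<and>
      vc K (hc K i \<Delta>) cb = vc K (hc K cb i) (vc K (hc K i cb) (hc K \<Delta> i)) \<and>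
      vc K (hc K i \<epsilon>) cb = hc K \<epsilon> i \<and>
      vc K (hc K \<mu> \<mu>) (vc K (hc K i (hc K cb i)) (hc K \<Delta> \<Delta>)) = vc K \<Delta> \<mu> \<and>
      hc K \<epsilon> \<epsilon> = vc K \<epsilon> \<mu> \<and>
      hc K \<eta> \<eta> = vc K \<Delta> \<eta> \<and>
      vc K \<epsilon> \<eta> = id2 K (idn K A))"

definition pre_functor :: "('o,'a,'c) cat2 \<Rightarrow> ('p,'b,'d) cat2 \<Rightarrow>
    ('o \<Rightarrow> 'p) \<Rightarrow> ('a \<Rightarrow> 'b) \<Rightarrow> ('c \<Rightarrow> 'd) \<Rightarrow> bool" where
  "pre_functor K K' Fo F1 F2 \<longleftrightarrow>
    (\<forall>A \<in> Ob K. Fo A \<in> Ob K') \<and>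
    (\<forall>A B f. f \<in> hom1 K A B \<longrightarrow> F1 f \<in> hom1 K' (Fo A) (Fo B)) \<and>
    (\<forall>f g \<alpha>. \<alpha> \<in> hom2 K f g \<longrightarrow> F2 \<alpha> \<in> hom2 K' (F1 f) (F1 g)) \<and>
    (\<forall>f g h \<alpha> \<beta>. \<alpha> \<in> hom2 K f g \<longrightarrow> \<beta> \<in> hom2 K g h \<longrightarrow> F2 (vc K \<beta> \<alpha>) = vc K' (F2 \<beta>) (F2 \<alpha>)) \<and>
    (\<forall>f \<in> Ar K. F2 (id2 K f) = id2 K' (F1 f))"

text \<open>Lax functor: L2 g f = F^2_{g,f} : F g o F f => F(g f), L0 A = F^0_A : id => F(id_A).\<close>
definition lax_functor :: "('o,'a,'c) cat2 \<Rightarrow> ('p,'b,'d) cat2 \<Rightarrow>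
    ('o \<Rightarrow> 'p) \<Rightarrow> ('a \<Rightarrow> 'b) \<Rightarrow> ('c \<Rightarrow> 'd) \<Rightarrow> ('a \<Rightarrow> 'a \<Rightarrow> 'd) \<Rightarrow> ('o \<Rightarrow> 'd) \<Rightarrow> bool" where
  "lax_functor K K' Fo F1 F2 L2 L0 \<longleftrightarrow> pre_functor K K' Fo F1 F2 \<and>
    (\<forall>A B C f g. f \<in> hom1 K A B \<longrightarrow> g \<in> hom1 K B C \<longrightarrow>
        L2 g f \<in> hom2 K' (cmp K' (F1 g) (F1 f)) (F1 (cmp K g f))) \<and>
    (\<forall>A \<in> Ob K. L0 A \<in> hom2 K' (idn K' (Fo A)) (F1 (idn K A))) \<and>
    (\<forall>A B C f f' g g' \<alpha> \<beta>. f \<in> hom1 K A B \<longrightarrow> f' \<in> hom1 K A B \<longrightarrow>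
        g \<in> hom1 K B C \<longrightarrow> g' \<in> hom1 K B C \<longrightarrow> \<alpha> \<in> hom2 K f f' \<longrightarrow> \<beta> \<in> hom2 K g g' \<longrightarrow>
        vc K' (L2 g' f') (hc K' (F2 \<beta>) (F2 \<alpha>)) = vc K' (F2 (hc K \<beta> \<alpha>)) (L2 g f)) \<and>
    (\<forall>A B C D f g h. f \<in> hom1 K A B \<longrightarrow> g \<in> hom1 K B C \<longrightarrow> h \<in> hom1 K C D \<longrightarrow>
        vc K' (L2 h (cmp K g f)) (hc K' (id2 K' (F1 h)) (L2 g f))
      = vc K' (L2 (cmp K h g) f) (hc K' (L2 h g) (id2 K' (F1 f)))) \<and>
    (\<forall>A B f. f \<in> hom1 K A B \<longrightarrow>
        vc K' (L2 (idn K B) f) (hc K' (L0 B) (id2 K' (F1 f))) = id2 K' (F1 f) \<and>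
        vc K' (L2 f (idn K A)) (hc K' (id2 K' (F1 f)) (L0 A)) = id2 K' (F1 f))"

text \<open>Colax functor: C2 g f = F_{2;g,f} : F(g f) => F g o F f, C0 A = F_{0;A} : F(id_A) => id.\<close>
definition colax_functor :: "('o,'a,'c) cat2 \<Rightarrow> ('p,'b,'d) cat2 \<Rightarrow>
    ('o \<Rightarrow> 'p) \<Rightarrow> ('a \<Rightarrow> 'b) \<Rightarrow> ('c \<Rightarrow> 'd) \<Rightarrow> ('a \<Rightarrow> 'a \<Rightarrow> 'd) \<Rightarrow> ('o \<Rightarrow> 'd) \<Rightarrow> bool" where
  "colax_functor K K' Fo F1 F2 C2 C0 \<longleftrightarrow> pre_functor K K' Fo F1 F2 \<and>
    (\<forall>A B C f g. f \<in> hom1 K A B \<longrightarrow> g \<in> hom1 K B C \<longrightarrow>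
        C2 g f \<in> hom2 K' (F1 (cmp K g f)) (cmp K' (F1 g) (F1 f))) \<and>
    (\<forall>A \<in> Ob K. C0 A \<in> hom2 K' (F1 (idn K A)) (idn K' (Fo A))) \<and>
    (\<forall>A B C f f' g g' \<alpha> \<beta>. f \<in> hom1 K A B \<longrightarrow> f' \<in> hom1 K A B \<longrightarrow>
        g \<in> hom1 K B C \<longrightarrow> g' \<in> hom1 K B C \<longrightarrow> \<alpha> \<in> hom2 K f f' \<longrightarrow> \<beta> \<in> hom2 K g g' \<longrightarrow>
        vc K' (hc K' (F2 \<beta>) (F2 \<alpha>)) (C2 g f) = vc K' (C2 g' f') (F2 (hc K \<beta> \<alpha>))) \<and>
    (\<forall>A B C D f g h. f \<in> hom1 K A B \<longrightarrow> g \<in> hom1 K B C \<longrightarrow> h \<in> hom1 K C D \<longrightarrow>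
        vc K' (hc K' (id2 K' (F1 h)) (C2 g f)) (C2 h (cmp K g f))
      = vc K' (hc K' (C2 h g) (id2 K' (F1 f))) (C2 (cmp K h g) f)) \<and>
    (\<forall>A B f. f \<in> hom1 K A B \<longrightarrow>
        vc K' (hc K' (C0 B) (id2 K' (F1 f))) (C2 (idn K B) f) = id2 K' (F1 f) \<and>
        vc K' (hc K' (id2 K' (F1 f)) (C0 A)) (C2 f (idn K A)) = id2 K' (F1 f))"

text \<open>Bilax functor (F, nu) : (K, c) -> K'.  Only the part of the distributive-law and
  bilaxity axioms recorded in the context is imposed.\<close>
definition bilax_functor :: "('o,'a,'c) cat2 \<Rightarrow> ('a \<Rightarrow> 'a \<Rightarrow> 'c) \<Rightarrow> ('p,'b,'d) cat2 \<Rightarrow>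
    ('o \<Rightarrow> 'p) \<Rightarrow> ('a \<Rightarrow> 'b) \<Rightarrow> ('c \<Rightarrow> 'd) \<Rightarrow> ('a \<Rightarrow> 'a \<Rightarrow> 'd) \<Rightarrow> ('o \<Rightarrow> 'd) \<Rightarrow>
    ('a \<Rightarrow> 'a \<Rightarrow> 'd) \<Rightarrow> ('o \<Rightarrow> 'd) \<Rightarrow> ('a \<Rightarrow> 'a \<Rightarrow> 'd) \<Rightarrow> bool" where
  "bilax_functor K c K' Fo F1 F2 L2 L0 C2 C0 \<nu> \<longleftrightarrow>
    lax_functor K K' Fo F1 F2 L2 L0 \<and> colax_functor K K' Fo F1 F2 C2 C0 \<and>
    (\<forall>A \<in> Ob K. \<forall>f g. endo K A f \<longrightarrow> endo K A g \<longrightarrow>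
        \<nu> g f \<in> hom2 K' (cmp K' (F1 g) (F1 f)) (cmp K' (F1 f) (F1 g))) \<and>
    (\<forall>A \<in> Ob K. \<forall>f f' g g' \<alpha> \<beta>. endo K A f \<longrightarrow> endo K A f' \<longrightarrow> endo K A g \<longrightarrow> endo K A g' \<longrightarrow>
        \<alpha> \<in> hom2 K f f' \<longrightarrow> \<beta> \<in> hom2 K g g' \<longrightarrow>
        vc K' (\<nu> g' f') (hc K' (F2 \<beta>) (F2 \<alpha>)) = vc K' (hc K' (F2 \<alpha>) (F2 \<beta>)) (\<nu> g f)) \<and>
    (\<forall>A \<in> Ob K. \<forall>f g h. endo K A f \<longrightarrow> endo K A g \<longrightarrow> endo K A h \<longrightarrow>
        vc K' (hc K' (id2 K' (F1 f)) (\<nu> h g))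
          (vc K' (hc K' (\<nu> h f) (id2 K' (F1 g))) (hc K' (id2 K' (F1 h)) (\<nu> g f)))
      = vc K' (hc K' (\<nu> g f) (id2 K' (F1 h)))
          (vc K' (hc K' (id2 K' (F1 g)) (\<nu> h f)) (hc K' (\<nu> h g) (id2 K' (F1 f))))) \<and>
    (\<forall>A \<in> Ob K.
        hc K' (L0 A) (L0 A) = vc K' (C2 (idn K A) (idn K A)) (L0 A) \<and>
        hc K' (C0 A) (C0 A) = vc K' (C0 A) (L2 (idn K A) (idn K A)) \<and>
        vc K' (C0 A) (L0 A) = id2 K' (idn K' (Fo A)))"

definition colax_nat :: "('o,'a,'c) cat2 \<Rightarrow> ('p,'b,'d) cat2 \<Rightarrow>
    ('o \<Rightarrow> 'p) \<Rightarrow> ('a \<Rightarrow> 'b) \<Rightarrow> ('c \<Rightarrow> 'd) \<Rightarrow> ('a \<Rightarrow> 'a \<Rightarrow> 'd) \<Rightarrow> ('o \<Rightarrow> 'd) \<Rightarrow>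
    ('o \<Rightarrow> 'p) \<Rightarrow> ('a \<Rightarrow> 'b) \<Rightarrow> ('c \<Rightarrow> 'd) \<Rightarrow> ('a \<Rightarrow> 'a \<Rightarrow> 'd) \<Rightarrow> ('o \<Rightarrow> 'd) \<Rightarrow>
    ('o \<Rightarrow> 'b) \<Rightarrow> ('a \<Rightarrow> 'd) \<Rightarrow> bool" where
  "colax_nat K K' Fo F1 F2 FC2 FC0 Go G1 G2 GC2 GC0 \<phi>0 \<phi>1 \<longleftrightarrow>
    colax_functor K K' Fo F1 F2 FC2 FC0 \<and> colax_functor K K' Go G1 G2 GC2 GC0 \<and>
    (\<forall>A \<in> Ob K. \<phi>0 A \<in> hom1 K' (Fo A) (Go A)) \<and>
    (\<forall>A B f. f \<in> hom1 K A B \<longrightarrow>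
        \<phi>1 f \<in> hom2 K' (cmp K' (\<phi>0 B) (F1 f)) (cmp K' (G1 f) (\<phi>0 A))) \<and>
    (\<forall>A B f f' \<alpha>. f \<in> hom1 K A B \<longrightarrow> f' \<in> hom1 K A B \<longrightarrow> \<alpha> \<in> hom2 K f f' \<longrightarrow>
        vc K' (hc K' (G2 \<alpha>) (id2 K' (\<phi>0 A))) (\<phi>1 f) = vc K' (\<phi>1 f') (hc K' (id2 K' (\<phi>0 B)) (F2 \<alpha>))) \<and>
    (\<forall>A B C f g. f \<in> hom1 K A B \<longrightarrow> g \<in> hom1 K B C \<longrightarrow>
        vc K' (hc K' (GC2 g f) (id2 K' (\<phi>0 A))) (\<phi>1 (cmp K g f))
      = vc K' (hc K' (id2 K' (G1 g)) (\<phi>1 f))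
          (vc K' (hc K' (\<phi>1 g) (id2 K' (F1 f))) (hc K' (id2 K' (\<phi>0 C)) (FC2 g f)))) \<and>
    (\<forall>A \<in> Ob K. vc K' (hc K' (GC0 A) (id2 K' (\<phi>0 A))) (\<phi>1 (idn K A))
        = hc K' (id2 K' (\<phi>0 A)) (FC0 A))"

definition lax_nat :: "('o,'a,'c) cat2 \<Rightarrow> ('p,'b,'d) cat2 \<Rightarrow>
    ('o \<Rightarrow> 'p) \<Rightarrow> ('a \<Rightarrow> 'b) \<Rightarrow> ('c \<Rightarrow> 'd) \<Rightarrow> ('a \<Rightarrow> 'a \<Rightarrow> 'd) \<Rightarrow> ('o \<Rightarrow> 'd) \<Rightarrow>
    ('o \<Rightarrow> 'p) \<Rightarrow> ('a \<Rightarrow> 'b) \<Rightarrow> ('c \<Rightarrow> 'd) \<Rightarrow> ('a \<Rightarrow> 'a \<Rightarrow> 'd) \<Rightarrow> ('o \<Rightarrow> 'd) \<Rightarrow>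
    ('o \<Rightarrow> 'b) \<Rightarrow> ('a \<Rightarrow> 'd) \<Rightarrow> bool" where
  "lax_nat K K' Fo F1 F2 FL2 FL0 Go G1 G2 GL2 GL0 \<psi>0 \<psi>1 \<longleftrightarrow>
    lax_functor K K' Fo F1 F2 FL2 FL0 \<and> lax_functor K K' Go G1 G2 GL2 GL0 \<and>
    (\<forall>A \<in> Ob K. \<psi>0 A \<in> hom1 K' (Fo A) (Go A)) \<and>
    (\<forall>A B f. f \<in> hom1 K A B \<longrightarrow>
        \<psi>1 f \<in> hom2 K' (cmp K' (G1 f) (\<psi>0 A)) (cmp K' (\<psi>0 B) (F1 f))) \<and>
    (\<forall>A B f f' \<alpha>. f \<in> hom1 K A B \<longrightarrow> f' \<in> hom1 K A B \<longrightarrow> \<alpha> \<in> hom2 K f f' \<longrightarrow>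
        vc K' (hc K' (id2 K' (\<psi>0 B)) (F2 \<alpha>)) (\<psi>1 f) = vc K' (\<psi>1 f') (hc K' (G2 \<alpha>) (id2 K' (\<psi>0 A)))) \<and>
    (\<forall>A B C f g. f \<in> hom1 K A B \<longrightarrow> g \<in> hom1 K B C \<longrightarrow>
        vc K' (\<psi>1 (cmp K g f)) (hc K' (GL2 g f) (id2 K' (\<psi>0 A)))
      = vc K' (hc K' (id2 K' (\<psi>0 C)) (FL2 g f))
          (vc K' (hc K' (\<psi>1 g) (id2 K' (F1 f))) (hc K' (id2 K' (G1 g)) (\<psi>1 f)))) \<and>
    (\<forall>A \<in> Ob K. vc K' (\<psi>1 (idn K A)) (hc K' (GL0 A) (id2 K' (\<psi>0 A)))
        = hc K' (id2 K' (\<psi>0 A)) (FL0 A))"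

definition left_comodule :: "('o,'a,'c) cat2 \<Rightarrow> 'o \<Rightarrow> 'a \<Rightarrow> 'c \<Rightarrow> 'c \<Rightarrow> 'a \<Rightarrow> 'c \<Rightarrow> bool" where
  "left_comodule K A d \<Delta> \<epsilon> x co \<longleftrightarrow> x \<in> Ar K \<and> trg K x = A \<and>
    co \<in> hom2 K x (cmp K d x) \<and>
    vc K (hc K \<Delta> (id2 K x)) co = vc K (hc K (id2 K d) co) co \<and>
    vc K (hc K \<epsilon> (id2 K x)) co = id2 K x"

definition left_module :: "('o,'a,'c) cat2 \<Rightarrow> 'o \<Rightarrow> 'a \<Rightarrow> 'c \<Rightarrow> 'c \<Rightarrow> 'a \<Rightarrow> 'c \<Rightarrow> bool" where
  "left_module K A d \<mu> \<eta> x \<rho> \<longleftrightarrow> x \<in> Ar K \<and> trg K x = A \<and>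
    \<rho> \<in> hom2 K (cmp K d x) x \<and>
    vc K \<rho> (hc K \<mu> (id2 K x)) = vc K \<rho> (hc K (id2 K d) \<rho>) \<and>
    vc K \<rho> (hc K \<eta> (id2 K x)) = id2 K x"

end

theory Submission
  imports Defs
begin


locale s2 =
  fixes K :: "('o,'a,'c) cat2"
  assumes S: "strict_2cat K"
begin

lemma ax1:
  "(\<forall>f \<in> Ar K. src K f \<in> Ob K \<and> trg K f \<in> Ob K)"
  using S unfolding strict_2cat_def by (elim conjE) assumption

lemma ax2:
  "(\<forall>A \<in> Ob K. idn K A \<in> hom1 K A A)"
  using S unfolding strict_2cat_def by (elim conjE) assumption

lemma ax3:
  "(\<forall>A B C f g. f \<in> hom1 K A B \<longrightarrow> g \<in> hom1 K B C \<longrightarrow> cmp K g f \<in> hom1 K A C)"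
  using S unfolding strict_2cat_def by (elim conjE) assumption

lemma ax4:
  "(\<forall>A B C D f g h. f \<in> hom1 K A B \<longrightarrow> g \<in> hom1 K B C \<longrightarrow> h \<in> hom1 K C D \<longrightarrow>
        cmp K h (cmp K g f) = cmp K (cmp K h g) f)"
  using S unfolding strict_2cat_def by (elim conjE) assumption

lemma ax5:
  "(\<forall>A B f. f \<in> hom1 K A B \<longrightarrow> cmp K (idn K B) f = f \<and> cmp K f (idn K A) = f)"
  using S unfolding strict_2cat_def by (elim conjE) assumption

lemma ax6:
  "(\<forall>\<alpha> \<in> Ce K. \<exists>A B. dom2 K \<alpha> \<in> hom1 K A B \<and> cod2 K \<alpha> \<in> hom1 K A B)"
  using S unfolding strict_2cat_def by (elim conjE) assumption

lemma ax7:
  "(\<forall>f \<in> Ar K. id2 K f \<in> hom2 K f f)"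
  using S unfolding strict_2cat_def by (elim conjE) assumption

lemma ax8:
  "(\<forall>f g h \<alpha> \<beta>. \<alpha> \<in> hom2 K f g \<longrightarrow> \<beta> \<in> hom2 K g h \<longrightarrow> vc K \<beta> \<alpha> \<in> hom2 K f h)"
  using S unfolding strict_2cat_def by (elim conjE) assumption

lemma ax9:
  "(\<forall>f g h k \<alpha> \<beta> \<gamma>. \<alpha> \<in> hom2 K f g \<longrightarrow> \<beta> \<in> hom2 K g h \<longrightarrow> \<gamma> \<in> hom2 K h k \<longrightarrow>
        vc K \<gamma> (vc K \<beta> \<alpha>) = vc K (vc K \<gamma> \<beta>) \<alpha>)"
  using S unfolding strict_2cat_def by (elim conjE) assumption

lemma ax10:
  "(\<forall>f g \<alpha>. \<alpha> \<in> hom2 K f g \<longrightarrow> vc K (id2 K g) \<alpha> = \<alpha> \<and> vc K \<alpha> (id2 K f) = \<alpha>)"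
  using S unfolding strict_2cat_def by (elim conjE) assumption

lemma ax11:
  "(\<forall>A B C f f' g g' \<alpha> \<beta>. f \<in> hom1 K A B \<longrightarrow> f' \<in> hom1 K A B \<longrightarrow>
        g \<in> hom1 K B C \<longrightarrow> g' \<in> hom1 K B C \<longrightarrow> \<alpha> \<in> hom2 K f f' \<longrightarrow> \<beta> \<in> hom2 K g g' \<longrightarrow>
        hc K \<beta> \<alpha> \<in> hom2 K (cmp K g f) (cmp K g' f'))"
  using S unfolding strict_2cat_def by (elim conjE) assumption

lemma ax12:
  "(\<forall>A B C D f f' g g' h h' \<alpha> \<beta> \<gamma>. f \<in> hom1 K A B \<longrightarrow> f' \<in> hom1 K A B \<longrightarrow>
        g \<in> hom1 K B C \<longrightarrow> g' \<in> hom1 K B C \<longrightarrow> h \<in> hom1 K C D \<longrightarrow> h' \<in> hom1 K C D \<longrightarrow>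
        \<alpha> \<in> hom2 K f f' \<longrightarrow> \<beta> \<in> hom2 K g g' \<longrightarrow> \<gamma> \<in> hom2 K h h' \<longrightarrow>
        hc K \<gamma> (hc K \<beta> \<alpha>) = hc K (hc K \<gamma> \<beta>) \<alpha>)"
  using S unfolding strict_2cat_def by (elim conjE) assumption

lemma ax13:
  "(\<forall>A B f f' \<alpha>. f \<in> hom1 K A B \<longrightarrow> f' \<in> hom1 K A B \<longrightarrow> \<alpha> \<in> hom2 K f f' \<longrightarrow>
        hc K (id2 K (idn K B)) \<alpha> = \<alpha> \<and> hc K \<alpha> (id2 K (idn K A)) = \<alpha>)"
  using S unfolding strict_2cat_def by (elim conjE) assumption

lemma ax14:
  "(\<forall>A B C f g. f \<in> hom1 K A B \<longrightarrow> g \<in> hom1 K B C \<longrightarrow>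
        hc K (id2 K g) (id2 K f) = id2 K (cmp K g f))"
  using S unfolding strict_2cat_def by (elim conjE) assumption

lemma ax15:
  "(\<forall>A B C f f' f'' g g' g'' \<alpha> \<alpha>' \<beta> \<beta>'.
        f \<in> hom1 K A B \<longrightarrow> f' \<in> hom1 K A B \<longrightarrow> f'' \<in> hom1 K A B \<longrightarrow>
        g \<in> hom1 K B C \<longrightarrow> g' \<in> hom1 K B C \<longrightarrow> g'' \<in> hom1 K B C \<longrightarrow>
        \<alpha> \<in> hom2 K f f' \<longrightarrow> \<alpha>' \<in> hom2 K f' f'' \<longrightarrow> \<beta> \<in> hom2 K g g' \<longrightarrow> \<beta>' \<in> hom2 K g' g'' \<longrightarrow>
        hc K (vc K \<beta>' \<beta>) (vc K \<alpha>' \<alpha>) = vc K (hc K \<beta>' \<alpha>') (hc K \<beta> \<alpha>))"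
  using S unfolding strict_2cat_def by (elim conjE) assumption

lemmas ax = ax1 ax2 ax3 ax4 ax5 ax6 ax7 ax8 ax9 ax10 ax11 ax12 ax13 ax14 ax15

lemma hom1D: "f \<in> hom1 K A B \<Longrightarrow> f \<in> Ar K \<and> src K f = A \<and> trg K f = B"
  by (simp add: hom1_def)

lemma idn_type: "A \<in> Ob K \<Longrightarrow> idn K A \<in> hom1 K A A"
  by (rule ax2[rule_format])

lemma cmp_type: "f \<in> hom1 K A B \<Longrightarrow> g \<in> hom1 K B C \<Longrightarrow> cmp K g f \<in> hom1 K A C"
  by (rule ax3[rule_format])

lemma cmp_assoc: "f \<in> hom1 K A B \<Longrightarrow> g \<in> hom1 K B C \<Longrightarrow> h \<in> hom1 K C D \<Longrightarrow>
        cmp K h (cmp K g f) = cmp K (cmp K h g) f"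
  by (rule ax4[rule_format])

lemma cmp_idl: "f \<in> hom1 K A B \<Longrightarrow> cmp K (idn K B) f = f"
  using ax5[rule_format] by blast
lemma cmp_idr: "f \<in> hom1 K A B \<Longrightarrow> cmp K f (idn K A) = f"
  using ax5[rule_format] by blast

lemma ce_ob: "\<forall>\<alpha> \<in> Ce K. \<exists>A B. dom2 K \<alpha> \<in> hom1 K A B \<and> cod2 K \<alpha> \<in> hom1 K A B"
  using ax(6) .

lemma hom2_cod: "\<alpha> \<in> hom2 K f g \<Longrightarrow> f \<in> hom1 K A B \<Longrightarrow> g \<in> hom1 K A B"
proof -
  assume a: "\<alpha> \<in> hom2 K f g" and f: "f \<in> hom1 K A B"
  from a ce_ob obtain A' B' where "f \<in> hom1 K A' B'" "g \<in> hom1 K A' B'"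
    unfolding hom2_def by blast
  with f show ?thesis by (auto simp: hom1_def)
qed

lemma hom2_dom: "\<alpha> \<in> hom2 K f g \<Longrightarrow> g \<in> hom1 K A B \<Longrightarrow> f \<in> hom1 K A B"
proof -
  assume a: "\<alpha> \<in> hom2 K f g" and f: "g \<in> hom1 K A B"
  from a ce_ob obtain A' B' where "f \<in> hom1 K A' B'" "g \<in> hom1 K A' B'"
    unfolding hom2_def by blast
  with f show ?thesis by (auto simp: hom1_def)
qed

lemma id2_type: "f \<in> hom1 K A B \<Longrightarrow> id2 K f \<in> hom2 K f f"
  by (rule ax7[rule_format]) (simp add: hom1_def)

lemma vc_type: "\<alpha> \<in> hom2 K f g \<Longrightarrow> \<beta> \<in> hom2 K g h \<Longrightarrow> vc K \<beta> \<alpha> \<in> hom2 K f h"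
  by (rule ax8[rule_format])

lemma hc_type: "\<alpha> \<in> hom2 K f f' \<Longrightarrow> \<beta> \<in> hom2 K g g' \<Longrightarrow> f \<in> hom1 K A B \<Longrightarrow> g \<in> hom1 K B C \<Longrightarrow>
   hc K \<beta> \<alpha> \<in> hom2 K (cmp K g f) (cmp K g' f')"
proof -
  assume a: "\<alpha> \<in> hom2 K f f'" "\<beta> \<in> hom2 K g g'" "f \<in> hom1 K A B" "g \<in> hom1 K B C"
  have b: "f' \<in> hom1 K A B" by (rule hom2_cod[OF a(1) a(3)])
  have c: "g' \<in> hom1 K B C" by (rule hom2_cod[OF a(2) a(4)])
  show ?thesis by (rule ax11[rule_format, OF a(3) b a(4) c a(1) a(2)])
qed

lemma vc_assoc: "\<alpha> \<in> hom2 K f g \<Longrightarrow> \<beta> \<in> hom2 K g h \<Longrightarrow> \<gamma> \<in> hom2 K h k \<Longrightarrow>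
        vc K \<gamma> (vc K \<beta> \<alpha>) = vc K (vc K \<gamma> \<beta>) \<alpha>"
  by (rule ax9[rule_format])

lemma vc_idl: "\<alpha> \<in> hom2 K f g \<Longrightarrow> vc K (id2 K g) \<alpha> = \<alpha>"
  using ax10[rule_format] by blast
lemma vc_idr: "\<alpha> \<in> hom2 K f g \<Longrightarrow> vc K \<alpha> (id2 K f) = \<alpha>"
  using ax10[rule_format] by blast

lemma hc_assoc: "\<alpha> \<in> hom2 K f f' \<Longrightarrow> \<beta> \<in> hom2 K g g' \<Longrightarrow> \<gamma> \<in> hom2 K h h' \<Longrightarrow>
   f \<in> hom1 K A B \<Longrightarrow> g \<in> hom1 K B C \<Longrightarrow> h \<in> hom1 K C D \<Longrightarrow>
   hc K \<gamma> (hc K \<beta> \<alpha>) = hc K (hc K \<gamma> \<beta>) \<alpha>"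
proof -
  assume a: "\<alpha> \<in> hom2 K f f'" "\<beta> \<in> hom2 K g g'" "\<gamma> \<in> hom2 K h h'"
   "f \<in> hom1 K A B" "g \<in> hom1 K B C" "h \<in> hom1 K C D"
  have b: "f' \<in> hom1 K A B" by (rule hom2_cod[OF a(1) a(4)])
  have c: "g' \<in> hom1 K B C" by (rule hom2_cod[OF a(2) a(5)])
  have d: "h' \<in> hom1 K C D" by (rule hom2_cod[OF a(3) a(6)])
  show ?thesis by (rule ax12[rule_format, OF a(4) b a(5) c a(6) d a(1) a(2) a(3)])
qed

lemma hc_idl: "\<alpha> \<in> hom2 K f f' \<Longrightarrow> f \<in> hom1 K A B \<Longrightarrow> hc K (id2 K (idn K B)) \<alpha> = \<alpha>"
proof -
  assume a: "\<alpha> \<in> hom2 K f f'" "f \<in> hom1 K A B"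
  have b: "f' \<in> hom1 K A B" by (rule hom2_cod[OF a(1) a(2)])
  show ?thesis using ax13[rule_format, OF a(2) b a(1)] by (rule conjunct1)
qed

lemma hc_idr: "\<alpha> \<in> hom2 K f f' \<Longrightarrow> f \<in> hom1 K A B \<Longrightarrow> hc K \<alpha> (id2 K (idn K A)) = \<alpha>"
proof -
  assume a: "\<alpha> \<in> hom2 K f f'" "f \<in> hom1 K A B"
  have b: "f' \<in> hom1 K A B" by (rule hom2_cod[OF a(1) a(2)])
  show ?thesis using ax13[rule_format, OF a(2) b a(1)] by (rule conjunct2)
qed

lemma hc_id2: "f \<in> hom1 K A B \<Longrightarrow> g \<in> hom1 K B C \<Longrightarrow> hc K (id2 K g) (id2 K f) = id2 K (cmp K g f)"
  by (rule ax14[rule_format])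

lemma interchange: "\<alpha> \<in> hom2 K f f' \<Longrightarrow> \<alpha>' \<in> hom2 K f' f'' \<Longrightarrow> \<beta> \<in> hom2 K g g' \<Longrightarrow> \<beta>' \<in> hom2 K g' g'' \<Longrightarrow>
   f \<in> hom1 K A B \<Longrightarrow> g \<in> hom1 K B C \<Longrightarrow>
   hc K (vc K \<beta>' \<beta>) (vc K \<alpha>' \<alpha>) = vc K (hc K \<beta>' \<alpha>') (hc K \<beta> \<alpha>)"
proof -
  assume a: "\<alpha> \<in> hom2 K f f'" "\<alpha>' \<in> hom2 K f' f''" "\<beta> \<in> hom2 K g g'" "\<beta>' \<in> hom2 K g' g''"
   "f \<in> hom1 K A B" "g \<in> hom1 K B C"
  have b: "f' \<in> hom1 K A B" by (rule hom2_cod[OF a(1) a(5)])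
  have c: "g' \<in> hom1 K B C" by (rule hom2_cod[OF a(3) a(6)])
  have d: "f'' \<in> hom1 K A B" by (rule hom2_cod[OF a(2) b])
  have e: "g'' \<in> hom1 K B C" by (rule hom2_cod[OF a(4) c])
  show ?thesis by (rule ax15[rule_format, OF a(5) b d a(6) c e a(1) a(2) a(3) a(4)])
qed


lemma hom1_iff: "f \<in> hom1 K A B \<longleftrightarrow> f \<in> Ar K \<and> src K f = A \<and> trg K f = B"
  by (simp add: hom1_def)
lemma hom2_iff: "\<alpha> \<in> hom2 K f g \<longleftrightarrow> \<alpha> \<in> Ce K \<and> dom2 K \<alpha> = f \<and> cod2 K \<alpha> = g"
  by (simp add: hom2_def)

lemma ar_src[simp]: "f \<in> Ar K \<Longrightarrow> src K f \<in> Ob K" using ax1 by blast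
lemma ar_trg[simp]: "f \<in> Ar K \<Longrightarrow> trg K f \<in> Ob K" using ax1 by blast

lemma ar_hom1: "f \<in> Ar K \<Longrightarrow> f \<in> hom1 K (src K f) (trg K f)" by (simp add: hom1_def)
lemma ce_hom2: "\<alpha> \<in> Ce K \<Longrightarrow> \<alpha> \<in> hom2 K (dom2 K \<alpha>) (cod2 K \<alpha>)" by (simp add: hom2_def)

lemma ce_dom_cod: "\<alpha> \<in> Ce K \<Longrightarrow> dom2 K \<alpha> \<in> hom1 K (src K (dom2 K \<alpha>)) (trg K (dom2 K \<alpha>))
   \<and> cod2 K \<alpha> \<in> hom1 K (src K (dom2 K \<alpha>)) (trg K (dom2 K \<alpha>))"
proof -
  assume a: "\<alpha> \<in> Ce K"
  then obtain A B where "dom2 K \<alpha> \<in> hom1 K A B" "cod2 K \<alpha> \<in> hom1 K A B" using ce_ob by blast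
  then show ?thesis by (simp add: hom1_def)
qed

lemma dom2_ar[simp]: "\<alpha> \<in> Ce K \<Longrightarrow> dom2 K \<alpha> \<in> Ar K" using ce_dom_cod[unfolded hom1_def] by blast
lemma cod2_ar[simp]: "\<alpha> \<in> Ce K \<Longrightarrow> cod2 K \<alpha> \<in> Ar K" using ce_dom_cod[unfolded hom1_def] by blast
lemma src_cod2[simp]: "\<alpha> \<in> Ce K \<Longrightarrow> src K (cod2 K \<alpha>) = src K (dom2 K \<alpha>)"
  using ce_dom_cod[unfolded hom1_def] by blast
lemma trg_cod2[simp]: "\<alpha> \<in> Ce K \<Longrightarrow> trg K (cod2 K \<alpha>) = trg K (dom2 K \<alpha>)"
  using ce_dom_cod[unfolded hom1_def] by blast

lemma idn_ar[simp]: "A \<in> Ob K \<Longrightarrow> idn K A \<in> Ar K" using idn_type[unfolded hom1_def] by blast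
lemma idn_src[simp]: "A \<in> Ob K \<Longrightarrow> src K (idn K A) = A" using idn_type[unfolded hom1_def] by blast
lemma idn_trg[simp]: "A \<in> Ob K \<Longrightarrow> trg K (idn K A) = A" using idn_type[unfolded hom1_def] by blast

lemma cmp_ar[simp]: "f \<in> Ar K \<Longrightarrow> g \<in> Ar K \<Longrightarrow> trg K f = src K g \<Longrightarrow> cmp K g f \<in> Ar K"
  using cmp_type[of f "src K f" "trg K f" g "trg K g"] by (simp add: hom1_def)
lemma cmp_src[simp]: "f \<in> Ar K \<Longrightarrow> g \<in> Ar K \<Longrightarrow> trg K f = src K g \<Longrightarrow> src K (cmp K g f) = src K f"
  using cmp_type[of f "src K f" "trg K f" g "trg K g"] by (simp add: hom1_def)
lemma cmp_trg[simp]: "f \<in> Ar K \<Longrightarrow> g \<in> Ar K \<Longrightarrow> trg K f = src K g \<Longrightarrow> trg K (cmp K g f) = trg K g"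
  using cmp_type[of f "src K f" "trg K f" g "trg K g"] by (simp add: hom1_def)
lemma cmp_assoc'[simp]: "f \<in> Ar K \<Longrightarrow> g \<in> Ar K \<Longrightarrow> h \<in> Ar K \<Longrightarrow> trg K f = src K g \<Longrightarrow> trg K g = src K h \<Longrightarrow>
   cmp K (cmp K h g) f = cmp K h (cmp K g f)"
  using cmp_assoc[of f "src K f" "trg K f" g "trg K g" h "trg K h"] by (simp add: hom1_def)
lemma cmp_idl'[simp]: "f \<in> Ar K \<Longrightarrow> B = trg K f \<Longrightarrow> cmp K (idn K B) f = f"
  using cmp_idl[of f "src K f" "trg K f"] by (simp add: hom1_def)
lemma cmp_idr'[simp]: "f \<in> Ar K \<Longrightarrow> A = src K f \<Longrightarrow> cmp K f (idn K A) = f"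
  using cmp_idr[of f "src K f" "trg K f"] by (simp add: hom1_def)

lemma id2_ce[simp]: "f \<in> Ar K \<Longrightarrow> id2 K f \<in> Ce K" using ax7[unfolded hom2_def] by blast
lemma id2_dom[simp]: "f \<in> Ar K \<Longrightarrow> dom2 K (id2 K f) = f" using ax7[unfolded hom2_def] by blast
lemma id2_cod[simp]: "f \<in> Ar K \<Longrightarrow> cod2 K (id2 K f) = f" using ax7[unfolded hom2_def] by blast

lemma vc_ce[simp]: "\<alpha> \<in> Ce K \<Longrightarrow> \<beta> \<in> Ce K \<Longrightarrow> cod2 K \<alpha> = dom2 K \<beta> \<Longrightarrow> vc K \<beta> \<alpha> \<in> Ce K"
  using vc_type[of \<alpha> "dom2 K \<alpha>" "cod2 K \<alpha>" \<beta> "cod2 K \<beta>"] by (simp add: hom2_def)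
lemma vc_dom[simp]: "\<alpha> \<in> Ce K \<Longrightarrow> \<beta> \<in> Ce K \<Longrightarrow> cod2 K \<alpha> = dom2 K \<beta> \<Longrightarrow> dom2 K (vc K \<beta> \<alpha>) = dom2 K \<alpha>"
  using vc_type[of \<alpha> "dom2 K \<alpha>" "cod2 K \<alpha>" \<beta> "cod2 K \<beta>"] by (simp add: hom2_def)
lemma vc_cod[simp]: "\<alpha> \<in> Ce K \<Longrightarrow> \<beta> \<in> Ce K \<Longrightarrow> cod2 K \<alpha> = dom2 K \<beta> \<Longrightarrow> cod2 K (vc K \<beta> \<alpha>) = cod2 K \<beta>"
  using vc_type[of \<alpha> "dom2 K \<alpha>" "cod2 K \<alpha>" \<beta> "cod2 K \<beta>"] by (simp add: hom2_def)

lemma hc_ce_all: "\<alpha> \<in> Ce K \<Longrightarrow> \<beta> \<in> Ce K \<Longrightarrow> trg K (dom2 K \<alpha>) = src K (dom2 K \<beta>) \<Longrightarrow>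
  hc K \<beta> \<alpha> \<in> hom2 K (cmp K (dom2 K \<beta>) (dom2 K \<alpha>)) (cmp K (cod2 K \<beta>) (cod2 K \<alpha>))"
  apply (rule hc_type[of \<alpha> "dom2 K \<alpha>" "cod2 K \<alpha>" \<beta> "dom2 K \<beta>" "cod2 K \<beta>" "src K (dom2 K \<alpha>)" "trg K (dom2 K \<alpha>)" "trg K (dom2 K \<beta>)"])
  by (simp_all add: hom2_def hom1_def)

lemma hc_ce[simp]: "\<alpha> \<in> Ce K \<Longrightarrow> \<beta> \<in> Ce K \<Longrightarrow> trg K (dom2 K \<alpha>) = src K (dom2 K \<beta>) \<Longrightarrow> hc K \<beta> \<alpha> \<in> Ce K"
  using hc_ce_all[unfolded hom2_def] by blast
lemma hc_dom[simp]: "\<alpha> \<in> Ce K \<Longrightarrow> \<beta> \<in> Ce K \<Longrightarrow> trg K (dom2 K \<alpha>) = src K (dom2 K \<beta>) \<Longrightarrow>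
   dom2 K (hc K \<beta> \<alpha>) = cmp K (dom2 K \<beta>) (dom2 K \<alpha>)"
  using hc_ce_all[unfolded hom2_def] by blast
lemma hc_cod[simp]: "\<alpha> \<in> Ce K \<Longrightarrow> \<beta> \<in> Ce K \<Longrightarrow> trg K (dom2 K \<alpha>) = src K (dom2 K \<beta>) \<Longrightarrow>
   cod2 K (hc K \<beta> \<alpha>) = cmp K (cod2 K \<beta>) (cod2 K \<alpha>)"
  using hc_ce_all[unfolded hom2_def] by blast

lemma vc_assoc'[simp]: "\<alpha> \<in> Ce K \<Longrightarrow> \<beta> \<in> Ce K \<Longrightarrow> \<gamma> \<in> Ce K \<Longrightarrow> cod2 K \<alpha> = dom2 K \<beta> \<Longrightarrow>
   cod2 K \<beta> = dom2 K \<gamma> \<Longrightarrow> vc K (vc K \<gamma> \<beta>) \<alpha> = vc K \<gamma> (vc K \<beta> \<alpha>)"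
  using vc_assoc[of \<alpha> "dom2 K \<alpha>" "cod2 K \<alpha>" \<beta> "cod2 K \<beta>" \<gamma> "cod2 K \<gamma>"] by (simp add: hom2_def)
lemma vc_idl'[simp]: "\<alpha> \<in> Ce K \<Longrightarrow> g = cod2 K \<alpha> \<Longrightarrow> vc K (id2 K g) \<alpha> = \<alpha>"
  using vc_idl[of \<alpha> "dom2 K \<alpha>" "cod2 K \<alpha>"] by (simp add: hom2_def)
lemma vc_idr'[simp]: "\<alpha> \<in> Ce K \<Longrightarrow> f = dom2 K \<alpha> \<Longrightarrow> vc K \<alpha> (id2 K f) = \<alpha>"
  using vc_idr[of \<alpha> "dom2 K \<alpha>" "cod2 K \<alpha>"] by (simp add: hom2_def)

lemma hc_assoc'[simp]: "\<alpha> \<in> Ce K \<Longrightarrow> \<beta> \<in> Ce K \<Longrightarrow> \<gamma> \<in> Ce K \<Longrightarrow> trg K (dom2 K \<alpha>) = src K (dom2 K \<beta>) \<Longrightarrow>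
   trg K (dom2 K \<beta>) = src K (dom2 K \<gamma>) \<Longrightarrow> hc K (hc K \<gamma> \<beta>) \<alpha> = hc K \<gamma> (hc K \<beta> \<alpha>)"
  using hc_assoc[of \<alpha> "dom2 K \<alpha>" "cod2 K \<alpha>" \<beta> "dom2 K \<beta>" "cod2 K \<beta>" \<gamma> "dom2 K \<gamma>" "cod2 K \<gamma>"
     "src K (dom2 K \<alpha>)" "trg K (dom2 K \<alpha>)" "trg K (dom2 K \<beta>)" "trg K (dom2 K \<gamma>)"]
  by (simp add: hom2_def hom1_def)
lemma hc_idl'[simp]: "\<alpha> \<in> Ce K \<Longrightarrow> B = trg K (dom2 K \<alpha>) \<Longrightarrow> hc K (id2 K (idn K B)) \<alpha> = \<alpha>"
  using hc_idl[of \<alpha> "dom2 K \<alpha>" "cod2 K \<alpha>" "src K (dom2 K \<alpha>)" "trg K (dom2 K \<alpha>)"] by (simp add: hom2_def hom1_def)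
lemma hc_idr'[simp]: "\<alpha> \<in> Ce K \<Longrightarrow> A = src K (dom2 K \<alpha>) \<Longrightarrow> hc K \<alpha> (id2 K (idn K A)) = \<alpha>"
  using hc_idr[of \<alpha> "dom2 K \<alpha>" "cod2 K \<alpha>" "src K (dom2 K \<alpha>)" "trg K (dom2 K \<alpha>)"] by (simp add: hom2_def hom1_def)
lemma hc_id2'[simp]: "f \<in> Ar K \<Longrightarrow> g \<in> Ar K \<Longrightarrow> trg K f = src K g \<Longrightarrow> hc K (id2 K g) (id2 K f) = id2 K (cmp K g f)"
  using hc_id2[of f "src K f" "trg K f" g "trg K g"] by (simp add: hom1_def)

lemma interchange': "\<alpha> \<in> Ce K \<Longrightarrow> \<alpha>' \<in> Ce K \<Longrightarrow> \<beta> \<in> Ce K \<Longrightarrow> \<beta>' \<in> Ce K \<Longrightarrow>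
   cod2 K \<alpha> = dom2 K \<alpha>' \<Longrightarrow> cod2 K \<beta> = dom2 K \<beta>' \<Longrightarrow> trg K (dom2 K \<alpha>) = src K (dom2 K \<beta>) \<Longrightarrow>
   vc K (hc K \<beta>' \<alpha>') (hc K \<beta> \<alpha>) = hc K (vc K \<beta>' \<beta>) (vc K \<alpha>' \<alpha>)"
  using interchange[of \<alpha> "dom2 K \<alpha>" "cod2 K \<alpha>" \<alpha>' "cod2 K \<alpha>'" \<beta> "dom2 K \<beta>" "cod2 K \<beta>" \<beta>' "cod2 K \<beta>'"
    "src K (dom2 K \<alpha>)" "trg K (dom2 K \<alpha>)" "trg K (dom2 K \<beta>)"]
  by (simp add: hom2_def hom1_def)

lemma hc_id2_hc[simp]: "f \<in> Ar K \<Longrightarrow> g \<in> Ar K \<Longrightarrow> \<alpha> \<in> Ce K \<Longrightarrow> trg K f = src K g \<Longrightarrow> trg K (dom2 K \<alpha>) = src K f \<Longrightarrow>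
  hc K (id2 K g) (hc K (id2 K f) \<alpha>) = hc K (id2 K (cmp K g f)) \<alpha>"
  using hc_assoc'[of \<alpha> "id2 K f" "id2 K g"] by simp

lemma whisk_l[simp]: "g \<in> Ar K \<Longrightarrow> \<alpha> \<in> Ce K \<Longrightarrow> \<alpha>' \<in> Ce K \<Longrightarrow> cod2 K \<alpha> = dom2 K \<alpha>' \<Longrightarrow>
   trg K (dom2 K \<alpha>) = src K g \<Longrightarrow>
   hc K (id2 K g) (vc K \<alpha>' \<alpha>) = vc K (hc K (id2 K g) \<alpha>') (hc K (id2 K g) \<alpha>)"
  using interchange'[of \<alpha> \<alpha>' "id2 K g" "id2 K g"] by simp

lemma whisk_r[simp]: "f \<in> Ar K \<Longrightarrow> \<beta> \<in> Ce K \<Longrightarrow> \<beta>' \<in> Ce K \<Longrightarrow> cod2 K \<beta> = dom2 K \<beta>' \<Longrightarrow>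
   trg K f = src K (dom2 K \<beta>) \<Longrightarrow>
   hc K (vc K \<beta>' \<beta>) (id2 K f) = vc K (hc K \<beta>' (id2 K f)) (hc K \<beta> (id2 K f))"
  using interchange'[of "id2 K f" "id2 K f" \<beta> \<beta>'] by simp

lemma hc_split1: "\<alpha> \<in> Ce K \<Longrightarrow> \<beta> \<in> Ce K \<Longrightarrow> trg K (dom2 K \<alpha>) = src K (dom2 K \<beta>) \<Longrightarrow>
  hc K \<beta> \<alpha> = vc K (hc K \<beta> (id2 K (cod2 K \<alpha>))) (hc K (id2 K (dom2 K \<beta>)) \<alpha>)"
  using interchange'[of \<alpha> "id2 K (cod2 K \<alpha>)" "id2 K (dom2 K \<beta>)" \<beta>] by simp
lemma hc_split2: "\<alpha> \<in> Ce K \<Longrightarrow> \<beta> \<in> Ce K \<Longrightarrow> trg K (dom2 K \<alpha>) = src K (dom2 K \<beta>) \<Longrightarrow>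
  hc K \<beta> \<alpha> = vc K (hc K (id2 K (cod2 K \<beta>)) \<alpha>) (hc K \<beta> (id2 K (dom2 K \<alpha>)))"
  using interchange'[of "id2 K (dom2 K \<alpha>)" \<alpha> \<beta> "id2 K (cod2 K \<beta>)"] by simp

lemma vc_tail: "vc K \<beta> \<alpha> = \<gamma> \<Longrightarrow> \<alpha> \<in> Ce K \<Longrightarrow> \<beta> \<in> Ce K \<Longrightarrow> \<tau> \<in> Ce K \<Longrightarrow> cod2 K \<alpha> = dom2 K \<beta> \<Longrightarrow>
  cod2 K \<tau> = dom2 K \<alpha> \<Longrightarrow> vc K \<beta> (vc K \<alpha> \<tau>) = vc K \<gamma> \<tau>"
  using vc_assoc' by metis

end



locale pre = K: s2 K + K': s2 K' for K :: "('o,'a,'c) cat2" and K' :: "('p,'b,'d) cat2" +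
  fixes Fo F1 F2
  assumes PF: "pre_functor K K' Fo F1 F2"
begin

lemma pf1: "\<forall>A \<in> Ob K. Fo A \<in> Ob K'" using PF unfolding pre_functor_def by (elim conjE) assumption
lemma pf2: "\<forall>A B f. f \<in> hom1 K A B \<longrightarrow> F1 f \<in> hom1 K' (Fo A) (Fo B)" using PF unfolding pre_functor_def by (elim conjE) assumption
lemma pf3: "\<forall>f g \<alpha>. \<alpha> \<in> hom2 K f g \<longrightarrow> F2 \<alpha> \<in> hom2 K' (F1 f) (F1 g)" using PF unfolding pre_functor_def by (elim conjE) assumption
lemma pf4: "\<forall>f g h \<alpha> \<beta>. \<alpha> \<in> hom2 K f g \<longrightarrow> \<beta> \<in> hom2 K g h \<longrightarrow> F2 (vc K \<beta> \<alpha>) = vc K' (F2 \<beta>) (F2 \<alpha>)" using PF unfolding pre_functor_def by (elim conjE) assumption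
lemma pf5: "\<forall>f \<in> Ar K. F2 (id2 K f) = id2 K' (F1 f)" using PF unfolding pre_functor_def by (elim conjE) assumption

lemma Fo_ob[simp]: "A \<in> Ob K \<Longrightarrow> Fo A \<in> Ob K'" using pf1 by blast
lemma F1_ar[simp]: "f \<in> Ar K \<Longrightarrow> F1 f \<in> Ar K'"
  using pf2[rule_format, OF K.ar_hom1] by (simp add: hom1_def)
lemma F1_src[simp]: "f \<in> Ar K \<Longrightarrow> src K' (F1 f) = Fo (src K f)"
  using pf2[rule_format, OF K.ar_hom1] by (simp add: hom1_def)
lemma F1_trg[simp]: "f \<in> Ar K \<Longrightarrow> trg K' (F1 f) = Fo (trg K f)"
  using pf2[rule_format, OF K.ar_hom1] by (simp add: hom1_def)
lemma F2_ce[simp]: "\<alpha> \<in> Ce K \<Longrightarrow> F2 \<alpha> \<in> Ce K'"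
  using pf3[rule_format, OF K.ce_hom2] by (simp add: hom2_def)
lemma F2_dom[simp]: "\<alpha> \<in> Ce K \<Longrightarrow> dom2 K' (F2 \<alpha>) = F1 (dom2 K \<alpha>)"
  using pf3[rule_format, OF K.ce_hom2] by (simp add: hom2_def)
lemma F2_cod[simp]: "\<alpha> \<in> Ce K \<Longrightarrow> cod2 K' (F2 \<alpha>) = F1 (cod2 K \<alpha>)"
  using pf3[rule_format, OF K.ce_hom2] by (simp add: hom2_def)
lemma F_vc: "\<alpha> \<in> Ce K \<Longrightarrow> \<beta> \<in> Ce K \<Longrightarrow> cod2 K \<alpha> = dom2 K \<beta> \<Longrightarrow> F2 (vc K \<beta> \<alpha>) = vc K' (F2 \<beta>) (F2 \<alpha>)"
  using pf4[rule_format, OF K.ce_hom2, of \<alpha> \<beta> "cod2 K \<beta>"] by (simp add: hom2_def)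
lemma F_id2[simp]: "f \<in> Ar K \<Longrightarrow> F2 (id2 K f) = id2 K' (F1 f)" using pf5 by blast

end

locale colax = pre +
  fixes C2 C0
  assumes CF: "colax_functor K K' Fo F1 F2 C2 C0"
begin
lemma cf1: "\<forall>A B C f g. f \<in> hom1 K A B \<longrightarrow> g \<in> hom1 K B C \<longrightarrow>
        C2 g f \<in> hom2 K' (F1 (cmp K g f)) (cmp K' (F1 g) (F1 f))" using CF unfolding colax_functor_def by (elim conjE) assumption
lemma cf2: "\<forall>A \<in> Ob K. C0 A \<in> hom2 K' (F1 (idn K A)) (idn K' (Fo A))" using CF unfolding colax_functor_def by (elim conjE) assumption
lemma cf3: "\<forall>A B C f f' g g' \<alpha> \<beta>. f \<in> hom1 K A B \<longrightarrow> f' \<in> hom1 K A B \<longrightarrow>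
        g \<in> hom1 K B C \<longrightarrow> g' \<in> hom1 K B C \<longrightarrow> \<alpha> \<in> hom2 K f f' \<longrightarrow> \<beta> \<in> hom2 K g g' \<longrightarrow>
        vc K' (hc K' (F2 \<beta>) (F2 \<alpha>)) (C2 g f) = vc K' (C2 g' f') (F2 (hc K \<beta> \<alpha>))" using CF unfolding colax_functor_def by (elim conjE) assumption
lemma cf4: "\<forall>A B C D f g h. f \<in> hom1 K A B \<longrightarrow> g \<in> hom1 K B C \<longrightarrow> h \<in> hom1 K C D \<longrightarrow>
        vc K' (hc K' (id2 K' (F1 h)) (C2 g f)) (C2 h (cmp K g f))
      = vc K' (hc K' (C2 h g) (id2 K' (F1 f))) (C2 (cmp K h g) f)" using CF unfolding colax_functor_def by (elim conjE) assumption
lemma cf5: "\<forall>A B f. f \<in> hom1 K A B \<longrightarrow>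
        vc K' (hc K' (C0 B) (id2 K' (F1 f))) (C2 (idn K B) f) = id2 K' (F1 f) \<and>
        vc K' (hc K' (id2 K' (F1 f)) (C0 A)) (C2 f (idn K A)) = id2 K' (F1 f)" using CF unfolding colax_functor_def by (elim conjE) assumption

lemma C2_all: "f \<in> Ar K \<Longrightarrow> g \<in> Ar K \<Longrightarrow> trg K f = src K g \<Longrightarrow>
   C2 g f \<in> hom2 K' (F1 (cmp K g f)) (cmp K' (F1 g) (F1 f))"
  using cf1[rule_format, of f "src K f" "trg K f" g "trg K g"] by (simp add: hom1_def)
lemma C2_ce[simp]: "f \<in> Ar K \<Longrightarrow> g \<in> Ar K \<Longrightarrow> trg K f = src K g \<Longrightarrow> C2 g f \<in> Ce K'"
  using C2_all[unfolded hom2_def] by blast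
lemma C2_dom[simp]: "f \<in> Ar K \<Longrightarrow> g \<in> Ar K \<Longrightarrow> trg K f = src K g \<Longrightarrow> dom2 K' (C2 g f) = F1 (cmp K g f)"
  using C2_all[unfolded hom2_def] by blast
lemma C2_cod[simp]: "f \<in> Ar K \<Longrightarrow> g \<in> Ar K \<Longrightarrow> trg K f = src K g \<Longrightarrow> cod2 K' (C2 g f) = cmp K' (F1 g) (F1 f)"
  using C2_all[unfolded hom2_def] by blast
lemma C0_ce[simp]: "A \<in> Ob K \<Longrightarrow> C0 A \<in> Ce K'" using cf2[unfolded hom2_def] by blast
lemma C0_dom[simp]: "A \<in> Ob K \<Longrightarrow> dom2 K' (C0 A) = F1 (idn K A)" using cf2[unfolded hom2_def] by blast
lemma C0_cod[simp]: "A \<in> Ob K \<Longrightarrow> cod2 K' (C0 A) = idn K' (Fo A)" using cf2[unfolded hom2_def] by blast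

lemma C_nat: "\<alpha> \<in> Ce K \<Longrightarrow> \<beta> \<in> Ce K \<Longrightarrow> trg K (dom2 K \<alpha>) = src K (dom2 K \<beta>) \<Longrightarrow>
  vc K' (hc K' (F2 \<beta>) (F2 \<alpha>)) (C2 (dom2 K \<beta>) (dom2 K \<alpha>)) = vc K' (C2 (cod2 K \<beta>) (cod2 K \<alpha>)) (F2 (hc K \<beta> \<alpha>))"
  using cf3[rule_format, of "dom2 K \<alpha>" "src K (dom2 K \<alpha>)" "trg K (dom2 K \<alpha>)" "cod2 K \<alpha>"
     "dom2 K \<beta>" "trg K (dom2 K \<beta>)" "cod2 K \<beta>" \<alpha> \<beta>] by (simp add: hom1_def hom2_def)

lemma C_assoc: "f \<in> Ar K \<Longrightarrow> g \<in> Ar K \<Longrightarrow> h \<in> Ar K \<Longrightarrow> trg K f = src K g \<Longrightarrow> trg K g = src K h \<Longrightarrow>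
   vc K' (hc K' (id2 K' (F1 h)) (C2 g f)) (C2 h (cmp K g f))
      = vc K' (hc K' (C2 h g) (id2 K' (F1 f))) (C2 (cmp K h g) f)"
  using cf4[rule_format, of f "src K f" "trg K f" g "trg K g" h "trg K h"] by (simp add: hom1_def)

lemma C_unitl: "f \<in> Ar K \<Longrightarrow> B = trg K f \<Longrightarrow> vc K' (hc K' (C0 B) (id2 K' (F1 f))) (C2 (idn K B) f) = id2 K' (F1 f)"
  using cf5[rule_format, of f "src K f" "trg K f"] by (simp add: hom1_def)
lemma C_unitr: "f \<in> Ar K \<Longrightarrow> A = src K f \<Longrightarrow> vc K' (hc K' (id2 K' (F1 f)) (C0 A)) (C2 f (idn K A)) = id2 K' (F1 f)"
  using cf5[rule_format, of f "src K f" "trg K f"] by (simp add: hom1_def)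
end

locale lax = pre +
  fixes L2 L0
  assumes LF: "lax_functor K K' Fo F1 F2 L2 L0"
begin
lemma lf1: "\<forall>A B C f g. f \<in> hom1 K A B \<longrightarrow> g \<in> hom1 K B C \<longrightarrow>
        L2 g f \<in> hom2 K' (cmp K' (F1 g) (F1 f)) (F1 (cmp K g f))" using LF unfolding lax_functor_def by (elim conjE) assumption
lemma lf2: "\<forall>A \<in> Ob K. L0 A \<in> hom2 K' (idn K' (Fo A)) (F1 (idn K A))" using LF unfolding lax_functor_def by (elim conjE) assumption
lemma L2_all: "f \<in> Ar K \<Longrightarrow> g \<in> Ar K \<Longrightarrow> trg K f = src K g \<Longrightarrow>
   L2 g f \<in> hom2 K' (cmp K' (F1 g) (F1 f)) (F1 (cmp K g f))"
  using lf1[rule_format, of f "src K f" "trg K f" g "trg K g"] by (simp add: hom1_def)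
lemma L2_ce[simp]: "f \<in> Ar K \<Longrightarrow> g \<in> Ar K \<Longrightarrow> trg K f = src K g \<Longrightarrow> L2 g f \<in> Ce K'"
  using L2_all[unfolded hom2_def] by blast
lemma L2_dom[simp]: "f \<in> Ar K \<Longrightarrow> g \<in> Ar K \<Longrightarrow> trg K f = src K g \<Longrightarrow> dom2 K' (L2 g f) = cmp K' (F1 g) (F1 f)"
  using L2_all[unfolded hom2_def] by blast
lemma L2_cod[simp]: "f \<in> Ar K \<Longrightarrow> g \<in> Ar K \<Longrightarrow> trg K f = src K g \<Longrightarrow> cod2 K' (L2 g f) = F1 (cmp K g f)"
  using L2_all[unfolded hom2_def] by blast
lemma L0_ce[simp]: "A \<in> Ob K \<Longrightarrow> L0 A \<in> Ce K'" using lf2[unfolded hom2_def] by blast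
lemma L0_dom[simp]: "A \<in> Ob K \<Longrightarrow> dom2 K' (L0 A) = idn K' (Fo A)" using lf2[unfolded hom2_def] by blast
lemma L0_cod[simp]: "A \<in> Ob K \<Longrightarrow> cod2 K' (L0 A) = F1 (idn K A)" using lf2[unfolded hom2_def] by blast
end




context colax begin

lemma comonad_pres:
  assumes M: "comonad2 K A b \<Delta> \<epsilon>"
  shows "comonad2 K' (Fo A) (F1 b) (vc K' (C2 b b) (F2 \<Delta>)) (vc K' (C0 A) (F2 \<epsilon>))"
proof -
  have A: "A \<in> Ob K" and b: "b \<in> Ar K" "src K b = A" "trg K b = A"
   and D: "\<Delta> \<in> Ce K" "dom2 K \<Delta> = b" "cod2 K \<Delta> = cmp K b b"
   and E: "\<epsilon> \<in> Ce K" "dom2 K \<epsilon> = b" "cod2 K \<epsilon> = idn K A"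
   and ca: "vc K (hc K \<Delta> (id2 K b)) \<Delta> = vc K (hc K (id2 K b) \<Delta>) \<Delta>"
   and cl: "vc K (hc K \<epsilon> (id2 K b)) \<Delta> = id2 K b" and cr: "vc K (hc K (id2 K b) \<epsilon>) \<Delta> = id2 K b"
    using M unfolding comonad2_def endo_def hom1_def hom2_def by auto
  note at[simp] = A b D E
  let ?d = "F1 b" let ?bb = "cmp K b b"
  have n1: "vc K' (hc K' (F2 \<Delta>) (id2 K' ?d)) (C2 b b) = vc K' (C2 ?bb b) (F2 (hc K \<Delta> (id2 K b)))"
    using C_nat[of "id2 K b" \<Delta>] by simp
  have n2: "vc K' (hc K' (id2 K' ?d) (F2 \<Delta>)) (C2 b b) = vc K' (C2 b ?bb) (F2 (hc K (id2 K b) \<Delta>))"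
    using C_nat[of \<Delta> "id2 K b"] by simp
  have as: "vc K' (hc K' (id2 K' ?d) (C2 b b)) (C2 b ?bb) = vc K' (hc K' (C2 b b) (id2 K' ?d)) (C2 ?bb b)"
    using C_assoc[of b b b] by simp
  have f1: "F2 (vc K (hc K \<Delta> (id2 K b)) \<Delta>) = vc K' (F2 (hc K \<Delta> (id2 K b))) (F2 \<Delta>)"
    by (rule F_vc) simp_all
  have f2: "F2 (vc K (hc K (id2 K b) \<Delta>) \<Delta>) = vc K' (F2 (hc K (id2 K b) \<Delta>)) (F2 \<Delta>)"
    by (rule F_vc) simp_all
  have "vc K' (hc K' (vc K' (C2 b b) (F2 \<Delta>)) (id2 K' ?d)) (vc K' (C2 b b) (F2 \<Delta>))
     = vc K' (hc K' (C2 b b) (id2 K' ?d)) (vc K' (hc K' (F2 \<Delta>) (id2 K' ?d)) (vc K' (C2 b b) (F2 \<Delta>)))"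
    by simp
  also have "\<dots> = vc K' (hc K' (C2 b b) (id2 K' ?d)) (vc K' (C2 ?bb b) (vc K' (F2 (hc K \<Delta> (id2 K b))) (F2 \<Delta>)))"
    by (subst K'.vc_tail[OF n1]) simp_all
  also have "\<dots> = vc K' (hc K' (id2 K' ?d) (C2 b b)) (vc K' (C2 b ?bb) (vc K' (F2 (hc K \<Delta> (id2 K b))) (F2 \<Delta>)))"
    by (subst K'.vc_tail[OF as[symmetric]]) simp_all
  also have "\<dots> = vc K' (hc K' (id2 K' ?d) (C2 b b)) (vc K' (C2 b ?bb) (vc K' (F2 (hc K (id2 K b) \<Delta>)) (F2 \<Delta>)))"
    using f1 f2 ca by simp
  also have "\<dots> = vc K' (hc K' (id2 K' ?d) (C2 b b)) (vc K' (hc K' (id2 K' ?d) (F2 \<Delta>)) (vc K' (C2 b b) (F2 \<Delta>)))"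
    by (subst K'.vc_tail[OF n2[symmetric]]) simp_all
  also have "\<dots> = vc K' (hc K' (id2 K' ?d) (vc K' (C2 b b) (F2 \<Delta>))) (vc K' (C2 b b) (F2 \<Delta>))"
    by simp
  finally have coassoc: "vc K' (hc K' (vc K' (C2 b b) (F2 \<Delta>)) (id2 K' ?d)) (vc K' (C2 b b) (F2 \<Delta>))
     = vc K' (hc K' (id2 K' ?d) (vc K' (C2 b b) (F2 \<Delta>))) (vc K' (C2 b b) (F2 \<Delta>))" .
  have n3: "vc K' (hc K' (F2 \<epsilon>) (id2 K' ?d)) (C2 b b) = vc K' (C2 (idn K A) b) (F2 (hc K \<epsilon> (id2 K b)))"
    using C_nat[of "id2 K b" \<epsilon>] by simp
  have n4: "vc K' (hc K' (id2 K' ?d) (F2 \<epsilon>)) (C2 b b) = vc K' (C2 b (idn K A)) (F2 (hc K (id2 K b) \<epsilon>))"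
    using C_nat[of \<epsilon> "id2 K b"] by simp
  have u1: "vc K' (hc K' (C0 A) (id2 K' ?d)) (C2 (idn K A) b) = id2 K' ?d"
    using C_unitl[of b A] by simp
  have u2: "vc K' (hc K' (id2 K' ?d) (C0 A)) (C2 b (idn K A)) = id2 K' ?d"
    using C_unitr[of b A] by simp
  have f3: "F2 (vc K (hc K \<epsilon> (id2 K b)) \<Delta>) = vc K' (F2 (hc K \<epsilon> (id2 K b))) (F2 \<Delta>)"
    by (rule F_vc) simp_all
  have f4: "F2 (vc K (hc K (id2 K b) \<epsilon>) \<Delta>) = vc K' (F2 (hc K (id2 K b) \<epsilon>)) (F2 \<Delta>)"
    by (rule F_vc) simp_all
  have "vc K' (hc K' (vc K' (C0 A) (F2 \<epsilon>)) (id2 K' ?d)) (vc K' (C2 b b) (F2 \<Delta>))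
     = vc K' (hc K' (C0 A) (id2 K' ?d)) (vc K' (hc K' (F2 \<epsilon>) (id2 K' ?d)) (vc K' (C2 b b) (F2 \<Delta>)))"
    by simp
  also have "\<dots> = vc K' (hc K' (C0 A) (id2 K' ?d)) (vc K' (C2 (idn K A) b) (vc K' (F2 (hc K \<epsilon> (id2 K b))) (F2 \<Delta>)))"
    by (subst K'.vc_tail[OF n3]) simp_all
  also have "\<dots> = vc K' (F2 (hc K \<epsilon> (id2 K b))) (F2 \<Delta>)"
    by (subst K'.vc_tail[OF u1]) simp_all
  also have "\<dots> = id2 K' ?d" using f3 cl by simp
  finally have counitl: "vc K' (hc K' (vc K' (C0 A) (F2 \<epsilon>)) (id2 K' ?d)) (vc K' (C2 b b) (F2 \<Delta>)) = id2 K' ?d" .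
  have "vc K' (hc K' (id2 K' ?d) (vc K' (C0 A) (F2 \<epsilon>))) (vc K' (C2 b b) (F2 \<Delta>))
     = vc K' (hc K' (id2 K' ?d) (C0 A)) (vc K' (hc K' (id2 K' ?d) (F2 \<epsilon>)) (vc K' (C2 b b) (F2 \<Delta>)))"
    by simp
  also have "\<dots> = vc K' (hc K' (id2 K' ?d) (C0 A)) (vc K' (C2 b (idn K A)) (vc K' (F2 (hc K (id2 K b) \<epsilon>)) (F2 \<Delta>)))"
    by (subst K'.vc_tail[OF n4]) simp_all
  also have "\<dots> = vc K' (F2 (hc K (id2 K b) \<epsilon>)) (F2 \<Delta>)"
    by (subst K'.vc_tail[OF u2]) simp_all
  also have "\<dots> = id2 K' ?d" using f4 cr by simp
  finally have counitr: "vc K' (hc K' (id2 K' ?d) (vc K' (C0 A) (F2 \<epsilon>))) (vc K' (C2 b b) (F2 \<Delta>)) = id2 K' ?d" .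
  show ?thesis unfolding comonad2_def endo_def hom1_def hom2_def
    using coassoc counitl counitr by simp
qed
end



lemma comodule_main:
  fixes K :: "('o,'a,'c) cat2" and K' :: "('p,'b,'d) cat2"
  assumes SK: "strict_2cat K" and SK': "strict_2cat K'"
    and N: "colax_nat K K' Fo F1 F2 FC2 FC0 Go G1 G2 GC2 GC0 \<phi>0 \<phi>1"
    and M: "comonad2 K A b \<Delta> \<epsilon>"
    and eta: "\<eta> \<in> hom2 K (idn K A) b" and de: "vc K \<Delta> \<eta> = hc K \<eta> \<eta>" and ee: "vc K \<epsilon> \<eta> = id2 K (idn K A)"
    and L0t: "FL0 A \<in> hom2 K' (idn K' (Fo A)) (F1 (idn K A))"
    and b1: "hc K' (FL0 A) (FL0 A) = vc K' (FC2 (idn K A) (idn K A)) (FL0 A)"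
    and b2: "vc K' (FC0 A) (FL0 A) = id2 K' (idn K' (Fo A))"
  shows "comonad2 K' (Go A) (G1 b) (vc K' (GC2 b b) (G2 \<Delta>)) (vc K' (GC0 A) (G2 \<epsilon>)) \<and>
       left_comodule K' (Go A) (G1 b) (vc K' (GC2 b b) (G2 \<Delta>)) (vc K' (GC0 A) (G2 \<epsilon>)) (\<phi>0 A)
         (vc K' (hc K' (G2 \<eta>) (id2 K' (\<phi>0 A)))
            (vc K' (\<phi>1 (idn K A)) (hc K' (id2 K' (\<phi>0 A)) (FL0 A))))"
proof -
  have CF: "colax_functor K K' Fo F1 F2 FC2 FC0"
    using N unfolding colax_nat_def by (elim conjE) assumption
  have CG: "colax_functor K K' Go G1 G2 GC2 GC0"
    using N unfolding colax_nat_def by (elim conjE) assumption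
  have n1: "\<forall>A \<in> Ob K. \<phi>0 A \<in> hom1 K' (Fo A) (Go A)"
    using N unfolding colax_nat_def by (elim conjE) assumption
  have n2: "\<forall>A B f. f \<in> hom1 K A B \<longrightarrow>
        \<phi>1 f \<in> hom2 K' (cmp K' (\<phi>0 B) (F1 f)) (cmp K' (G1 f) (\<phi>0 A))"
    using N unfolding colax_nat_def by (elim conjE) assumption
  have n4: "\<forall>A B C f g. f \<in> hom1 K A B \<longrightarrow> g \<in> hom1 K B C \<longrightarrow>
        vc K' (hc K' (GC2 g f) (id2 K' (\<phi>0 A))) (\<phi>1 (cmp K g f))
      = vc K' (hc K' (id2 K' (G1 g)) (\<phi>1 f))
          (vc K' (hc K' (\<phi>1 g) (id2 K' (F1 f))) (hc K' (id2 K' (\<phi>0 C)) (FC2 g f)))"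
    using N unfolding colax_nat_def by (elim conjE) assumption
  have n5: "\<forall>A \<in> Ob K. vc K' (hc K' (GC0 A) (id2 K' (\<phi>0 A))) (\<phi>1 (idn K A))
        = hc K' (id2 K' (\<phi>0 A)) (FC0 A)"
    using N unfolding colax_nat_def by (elim conjE) assumption
  interpret F: colax K K' Fo F1 F2 FC2 FC0
    using SK SK' CF by (simp add: colax_def pre_def s2_def colax_axioms_def pre_axioms_def colax_functor_def)
  interpret G: colax K K' Go G1 G2 GC2 GC0
    using SK SK' CG by (simp add: colax_def pre_def s2_def colax_axioms_def pre_axioms_def colax_functor_def)
  have GM: "comonad2 K' (Go A) (G1 b) (vc K' (GC2 b b) (G2 \<Delta>)) (vc K' (GC0 A) (G2 \<epsilon>))"
    by (rule G.comonad_pres[OF M])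
  have A: "A \<in> Ob K" and b: "b \<in> Ar K" "src K b = A" "trg K b = A"
   and D: "\<Delta> \<in> Ce K" "dom2 K \<Delta> = b" "cod2 K \<Delta> = cmp K b b"
   and E: "\<epsilon> \<in> Ce K" "dom2 K \<epsilon> = b" "cod2 K \<epsilon> = idn K A"
    using M unfolding comonad2_def endo_def hom1_def hom2_def by auto
  have H: "\<eta> \<in> Ce K" "dom2 K \<eta> = idn K A" "cod2 K \<eta> = b" using eta by (auto simp: hom2_def)
  have L0: "FL0 A \<in> Ce K'" "dom2 K' (FL0 A) = idn K' (Fo A)" "cod2 K' (FL0 A) = F1 (idn K A)"
    using L0t by (auto simp: hom2_def)
  have x: "\<phi>0 A \<in> Ar K'" "src K' (\<phi>0 A) = Fo A" "trg K' (\<phi>0 A) = Go A"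
    using n1 A by (auto simp: hom1_def)
  have P: "\<phi>1 (idn K A) \<in> Ce K'" "dom2 K' (\<phi>1 (idn K A)) = cmp K' (\<phi>0 A) (F1 (idn K A))"
     "cod2 K' (\<phi>1 (idn K A)) = cmp K' (G1 (idn K A)) (\<phi>0 A)"
    using n2[rule_format, of "idn K A" A A] A by (auto simp: hom2_def hom1_def)
  note at[simp] = A b D E H L0 x P
  let ?x = "\<phi>0 A" let ?P = "\<phi>1 (idn K A)" let ?i = "idn K A"
  let ?Gb = "G1 b" let ?Gi = "G1 (idn K A)" let ?Fi = "F1 (idn K A)"
  let ?\<Lambda> = "vc K' (hc K' (G2 \<eta>) (id2 K' ?x)) (vc K' ?P (hc K' (id2 K' ?x) (FL0 A)))"
  have pe: "vc K' (G2 \<epsilon>) (G2 \<eta>) = id2 K' ?Gi" using G.F_vc[of \<eta> \<epsilon>] ee by simp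
  have p1: "vc K' (hc K' (G2 \<epsilon>) (id2 K' ?x)) (hc K' (G2 \<eta>) (id2 K' ?x)) = id2 K' (cmp K' ?Gi ?x)"
    using F.K'.interchange'[of "id2 K' ?x" "id2 K' ?x" "G2 \<eta>" "G2 \<epsilon>"] pe by simp
  have p2: "vc K' (hc K' (id2 K' ?x) (FC0 A)) (hc K' (id2 K' ?x) (FL0 A)) = id2 K' ?x"
    using F.K'.interchange'[of "FL0 A" "FC0 A" "id2 K' ?x" "id2 K' ?x"] b2 by simp
  have u: "vc K' (hc K' (GC0 A) (id2 K' ?x)) ?P = hc K' (id2 K' ?x) (FC0 A)"
    using n5 A by simp
  have "vc K' (hc K' (vc K' (GC0 A) (G2 \<epsilon>)) (id2 K' ?x)) ?\<Lambda>
    = vc K' (hc K' (GC0 A) (id2 K' ?x)) (vc K' (hc K' (G2 \<epsilon>) (id2 K' ?x)) (vc K' (hc K' (G2 \<eta>) (id2 K' ?x)) (vc K' ?P (hc K' (id2 K' ?x) (FL0 A)))))"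
    by simp
  also have "\<dots> = vc K' (hc K' (GC0 A) (id2 K' ?x)) (vc K' (id2 K' (cmp K' ?Gi ?x)) (vc K' ?P (hc K' (id2 K' ?x) (FL0 A))))"
    by (subst F.K'.vc_tail[OF p1]) simp_all
  also have "\<dots> = vc K' (hc K' (GC0 A) (id2 K' ?x)) (vc K' ?P (hc K' (id2 K' ?x) (FL0 A)))"
    by simp
  also have "\<dots> = vc K' (hc K' (id2 K' ?x) (FC0 A)) (hc K' (id2 K' ?x) (FL0 A))"
    by (subst F.K'.vc_tail[OF u]) simp_all
  also have "\<dots> = id2 K' ?x" by (rule p2)
  finally have counit: "vc K' (hc K' (vc K' (GC0 A) (G2 \<epsilon>)) (id2 K' ?x)) ?\<Lambda> = id2 K' ?x" .
  let ?L0 = "FL0 A" let ?D = "vc K' (GC2 b b) (G2 \<Delta>)"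
  have gde: "vc K' (G2 \<Delta>) (G2 \<eta>) = G2 (hc K \<eta> \<eta>)" using G.F_vc[of \<eta> \<Delta>] de by simp
  have q1: "vc K' (hc K' (G2 \<Delta>) (id2 K' ?x)) (hc K' (G2 \<eta>) (id2 K' ?x)) = hc K' (G2 (hc K \<eta> \<eta>)) (id2 K' ?x)"
    using F.K'.interchange'[of "id2 K' ?x" "id2 K' ?x" "G2 \<eta>" "G2 \<Delta>"] gde by simp
  have cn: "vc K' (GC2 b b) (G2 (hc K \<eta> \<eta>)) = vc K' (hc K' (G2 \<eta>) (G2 \<eta>)) (GC2 ?i ?i)"
    using G.C_nat[of \<eta> \<eta>] by simp
  have "vc K' (hc K' (GC2 b b) (id2 K' ?x)) (hc K' (G2 (hc K \<eta> \<eta>)) (id2 K' ?x))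
      = hc K' (vc K' (GC2 b b) (G2 (hc K \<eta> \<eta>))) (id2 K' ?x)" by simp
  also have "\<dots> = hc K' (vc K' (hc K' (G2 \<eta>) (G2 \<eta>)) (GC2 ?i ?i)) (id2 K' ?x)" by (simp only: cn)
  also have "\<dots> = vc K' (hc K' (G2 \<eta>) (hc K' (G2 \<eta>) (id2 K' ?x))) (hc K' (GC2 ?i ?i) (id2 K' ?x))" by simp
  finally have q2: "vc K' (hc K' (GC2 b b) (id2 K' ?x)) (hc K' (G2 (hc K \<eta> \<eta>)) (id2 K' ?x))
      = vc K' (hc K' (G2 \<eta>) (hc K' (G2 \<eta>) (id2 K' ?x))) (hc K' (GC2 ?i ?i) (id2 K' ?x))" .
  have q3: "vc K' (hc K' (GC2 ?i ?i) (id2 K' ?x)) ?P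
     = vc K' (hc K' (id2 K' ?Gi) ?P) (vc K' (hc K' ?P (id2 K' ?Fi)) (hc K' (id2 K' ?x) (FC2 ?i ?i)))"
    using n4[rule_format, of ?i A A ?i A] by (simp add: hom1_def)
  have q4: "vc K' (hc K' (id2 K' ?x) (FC2 ?i ?i)) (hc K' (id2 K' ?x) ?L0) = hc K' (id2 K' ?x) (hc K' ?L0 ?L0)"
    using b1 by simp
  have q5: "hc K' (G2 \<eta>) (hc K' (G2 \<eta>) (id2 K' ?x))
     = vc K' (hc K' (id2 K' ?Gb) (hc K' (G2 \<eta>) (id2 K' ?x))) (hc K' (G2 \<eta>) (id2 K' (cmp K' ?Gi ?x)))"
    using F.K'.hc_split2[of "hc K' (G2 \<eta>) (id2 K' ?x)" "G2 \<eta>"] by simp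
  have q6: "vc K' (hc K' (G2 \<eta>) (id2 K' (cmp K' ?Gi ?x))) (hc K' (id2 K' ?Gi) ?P)
     = vc K' (hc K' (id2 K' ?Gb) ?P) (hc K' (G2 \<eta>) (id2 K' (cmp K' ?x ?Fi)))"
    using F.K'.hc_split1[of ?P "G2 \<eta>"] F.K'.hc_split2[of ?P "G2 \<eta>"] by simp
  have r1: "hc K' ?\<Lambda> ?L0 = vc K' (hc K' (id2 K' (cmp K' ?Gb ?x)) ?L0) ?\<Lambda>"
    using F.K'.hc_split2[of ?L0 ?\<Lambda>] by simp
  have r2: "hc K' ?\<Lambda> ?L0 = vc K' (hc K' ?\<Lambda> (id2 K' ?Fi)) (hc K' (id2 K' ?x) ?L0)"
    using F.K'.hc_split1[of ?L0 ?\<Lambda>] by simp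
  have r3: "vc K' (hc K' (id2 K' ?x) (hc K' ?L0 (id2 K' ?Fi))) (hc K' (id2 K' ?x) ?L0) = hc K' (id2 K' ?x) (hc K' ?L0 ?L0)"
    using F.K'.hc_split1[of ?L0 ?L0] by simp
  have "vc K' (hc K' (G2 \<eta>) (id2 K' (cmp K' ?x ?Fi))) (vc K' (hc K' ?P (id2 K' ?Fi)) (hc K' (id2 K' ?x) (hc K' ?L0 ?L0)))
     = vc K' (hc K' ?\<Lambda> (id2 K' ?Fi)) (hc K' (id2 K' ?x) ?L0)"
    using r3 by simp
  also have "\<dots> = vc K' (hc K' (id2 K' (cmp K' ?Gb ?x)) ?L0) ?\<Lambda>" using r1 r2 by simp
  finally have q7: "vc K' (hc K' (G2 \<eta>) (id2 K' (cmp K' ?x ?Fi))) (vc K' (hc K' ?P (id2 K' ?Fi)) (hc K' (id2 K' ?x) (hc K' ?L0 ?L0)))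
     = vc K' (hc K' (id2 K' (cmp K' ?Gb ?x)) ?L0) ?\<Lambda>" .
  have "vc K' (hc K' ?D (id2 K' ?x)) ?\<Lambda>
    = vc K' (hc K' (GC2 b b) (id2 K' ?x)) (vc K' (hc K' (G2 \<Delta>) (id2 K' ?x)) (vc K' (hc K' (G2 \<eta>) (id2 K' ?x)) (vc K' ?P (hc K' (id2 K' ?x) ?L0))))"
    by simp
  also have "\<dots> = vc K' (hc K' (GC2 b b) (id2 K' ?x)) (vc K' (hc K' (G2 (hc K \<eta> \<eta>)) (id2 K' ?x)) (vc K' ?P (hc K' (id2 K' ?x) ?L0)))"
    by (subst F.K'.vc_tail[OF q1]) simp_all
  also have "\<dots> = vc K' (hc K' (G2 \<eta>) (hc K' (G2 \<eta>) (id2 K' ?x))) (vc K' (hc K' (GC2 ?i ?i) (id2 K' ?x)) (vc K' ?P (hc K' (id2 K' ?x) ?L0)))"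
    by (subst F.K'.vc_tail[OF q2]) simp_all
  also have "\<dots> = vc K' (hc K' (G2 \<eta>) (hc K' (G2 \<eta>) (id2 K' ?x))) (vc K' (hc K' (id2 K' ?Gi) ?P) (vc K' (hc K' ?P (id2 K' ?Fi)) (vc K' (hc K' (id2 K' ?x) (FC2 ?i ?i)) (hc K' (id2 K' ?x) ?L0))))"
    by (subst F.K'.vc_tail[OF q3]) simp_all
  also have "\<dots> = vc K' (hc K' (G2 \<eta>) (hc K' (G2 \<eta>) (id2 K' ?x))) (vc K' (hc K' (id2 K' ?Gi) ?P) (vc K' (hc K' ?P (id2 K' ?Fi)) (hc K' (id2 K' ?x) (hc K' ?L0 ?L0))))"
    by (simp only: q4)
  also have "\<dots> = vc K' (hc K' (id2 K' ?Gb) (hc K' (G2 \<eta>) (id2 K' ?x))) (vc K' (hc K' (G2 \<eta>) (id2 K' (cmp K' ?Gi ?x))) (vc K' (hc K' (id2 K' ?Gi) ?P) (vc K' (hc K' ?P (id2 K' ?Fi)) (hc K' (id2 K' ?x) (hc K' ?L0 ?L0)))))"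
    by (subst q5) simp_all
  also have "\<dots> = vc K' (hc K' (id2 K' ?Gb) (hc K' (G2 \<eta>) (id2 K' ?x))) (vc K' (hc K' (id2 K' ?Gb) ?P) (vc K' (hc K' (G2 \<eta>) (id2 K' (cmp K' ?x ?Fi))) (vc K' (hc K' ?P (id2 K' ?Fi)) (hc K' (id2 K' ?x) (hc K' ?L0 ?L0)))))"
    by (subst F.K'.vc_tail[OF q6]) simp_all
  also have "\<dots> = vc K' (hc K' (id2 K' ?Gb) (hc K' (G2 \<eta>) (id2 K' ?x))) (vc K' (hc K' (id2 K' ?Gb) ?P) (vc K' (hc K' (id2 K' (cmp K' ?Gb ?x)) ?L0) ?\<Lambda>))"
    by (simp only: q7)
  also have "\<dots> = vc K' (hc K' (id2 K' ?Gb) ?\<Lambda>) ?\<Lambda>" by simp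
  finally have coassoc: "vc K' (hc K' ?D (id2 K' ?x)) ?\<Lambda> = vc K' (hc K' (id2 K' ?Gb) ?\<Lambda>) ?\<Lambda>" .
  show ?thesis using GM coassoc counit unfolding left_comodule_def hom2_def by simp
qed



definition co :: "('o,'a,'c) cat2 \<Rightarrow> ('o,'a,'c) cat2" where
  "co K = K\<lparr>dom2 := cod2 K, cod2 := dom2 K, vc := (\<lambda>b a. vc K a b)\<rparr>"

lemma co_sel[simp]: "Ob (co K) = Ob K" "Ar (co K) = Ar K" "Ce (co K) = Ce K" "src (co K) = src K"
  "trg (co K) = trg K" "idn (co K) = idn K" "cmp (co K) = cmp K" "dom2 (co K) = cod2 K" "cod2 (co K) = dom2 K"
  "vc (co K) b a = vc K a b" "hc (co K) = hc K" "id2 (co K) = id2 K"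
  by (simp_all add: co_def)

lemma hom1_co[simp]: "hom1 (co K) = hom1 K" by (simp add: hom1_def fun_eq_iff)
lemma hom2_co[simp]: "hom2 (co K) f g = hom2 K g f" by (auto simp add: hom2_def)
lemma endo_co[simp]: "endo (co K) = endo K" by (simp add: endo_def fun_eq_iff)

lemma strict_co: assumes S: "strict_2cat K" shows "strict_2cat (co K)"
proof -
  interpret s2 K by (rule s2.intro[OF S])
  show ?thesis unfolding strict_2cat_def co_sel hom1_co hom2_co
  proof (intro conjI allI impI ballI)
    show "\<And>f. f \<in> Ar K \<Longrightarrow> src K f \<in> Ob K" "\<And>f. f \<in> Ar K \<Longrightarrow> trg K f \<in> Ob K" by simp_all
    show "\<And>A. A \<in> Ob K \<Longrightarrow> idn K A \<in> hom1 K A A" by (rule idn_type)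
    show "\<And>A B C f g. f \<in> hom1 K A B \<Longrightarrow> g \<in> hom1 K B C \<Longrightarrow> cmp K g f \<in> hom1 K A C" by (rule cmp_type)
    show "\<And>A B C D f g h. f \<in> hom1 K A B \<Longrightarrow> g \<in> hom1 K B C \<Longrightarrow> h \<in> hom1 K C D \<Longrightarrow>
        cmp K h (cmp K g f) = cmp K (cmp K h g) f" by (rule cmp_assoc)
    show "\<And>A B f. f \<in> hom1 K A B \<Longrightarrow> cmp K (idn K B) f = f" by (rule cmp_idl)
    show "\<And>A B f. f \<in> hom1 K A B \<Longrightarrow> cmp K f (idn K A) = f" by (rule cmp_idr)
    show "\<And>\<alpha>. \<alpha> \<in> Ce K \<Longrightarrow> \<exists>A B. cod2 K \<alpha> \<in> hom1 K A B \<and> dom2 K \<alpha> \<in> hom1 K A B"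
      using ce_ob by blast
    show "\<And>f. f \<in> Ar K \<Longrightarrow> id2 K f \<in> hom2 K f f" using id2_type ar_hom1 by blast
    show "\<And>f g h \<alpha> \<beta>. \<alpha> \<in> hom2 K g f \<Longrightarrow> \<beta> \<in> hom2 K h g \<Longrightarrow> vc K \<alpha> \<beta> \<in> hom2 K h f"
      by (rule vc_type)
    show "\<And>f g h k \<alpha> \<beta> \<gamma>. \<alpha> \<in> hom2 K g f \<Longrightarrow> \<beta> \<in> hom2 K h g \<Longrightarrow> \<gamma> \<in> hom2 K k h \<Longrightarrow>
        vc K (vc K \<alpha> \<beta>) \<gamma> = vc K \<alpha> (vc K \<beta> \<gamma>)"
      by (rule vc_assoc[symmetric])
    show "\<And>f g \<alpha>. \<alpha> \<in> hom2 K g f \<Longrightarrow> vc K \<alpha> (id2 K g) = \<alpha>" by (rule vc_idr)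
    show "\<And>f g \<alpha>. \<alpha> \<in> hom2 K g f \<Longrightarrow> vc K (id2 K f) \<alpha> = \<alpha>" by (rule vc_idl)
    show "\<And>A B C f f' g g' \<alpha> \<beta>. f \<in> hom1 K A B \<Longrightarrow> f' \<in> hom1 K A B \<Longrightarrow>
        g \<in> hom1 K B C \<Longrightarrow> g' \<in> hom1 K B C \<Longrightarrow> \<alpha> \<in> hom2 K f' f \<Longrightarrow> \<beta> \<in> hom2 K g' g \<Longrightarrow>
        hc K \<beta> \<alpha> \<in> hom2 K (cmp K g' f') (cmp K g f)"
      by (rule hc_type)
    show "\<And>A B C D f f' g g' h h' \<alpha> \<beta> \<gamma>. f \<in> hom1 K A B \<Longrightarrow> f' \<in> hom1 K A B \<Longrightarrow>
        g \<in> hom1 K B C \<Longrightarrow> g' \<in> hom1 K B C \<Longrightarrow> h \<in> hom1 K C D \<Longrightarrow> h' \<in> hom1 K C D \<Longrightarrow>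
        \<alpha> \<in> hom2 K f' f \<Longrightarrow> \<beta> \<in> hom2 K g' g \<Longrightarrow> \<gamma> \<in> hom2 K h' h \<Longrightarrow>
        hc K \<gamma> (hc K \<beta> \<alpha>) = hc K (hc K \<gamma> \<beta>) \<alpha>"
      by (rule hc_assoc)
    show "\<And>A B f f' \<alpha>. f \<in> hom1 K A B \<Longrightarrow> f' \<in> hom1 K A B \<Longrightarrow> \<alpha> \<in> hom2 K f' f \<Longrightarrow>
        hc K (id2 K (idn K B)) \<alpha> = \<alpha>" by (rule hc_idl)
    show "\<And>A B f f' \<alpha>. f \<in> hom1 K A B \<Longrightarrow> f' \<in> hom1 K A B \<Longrightarrow> \<alpha> \<in> hom2 K f' f \<Longrightarrow>
        hc K \<alpha> (id2 K (idn K A)) = \<alpha>" by (rule hc_idr)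
    show "\<And>A B C f g. f \<in> hom1 K A B \<Longrightarrow> g \<in> hom1 K B C \<Longrightarrow> hc K (id2 K g) (id2 K f) = id2 K (cmp K g f)"
      by (rule hc_id2)
    show "\<And>A B C f f' f'' g g' g'' \<alpha> \<alpha>' \<beta> \<beta>'.
        f \<in> hom1 K A B \<Longrightarrow> f' \<in> hom1 K A B \<Longrightarrow> f'' \<in> hom1 K A B \<Longrightarrow>
        g \<in> hom1 K B C \<Longrightarrow> g' \<in> hom1 K B C \<Longrightarrow> g'' \<in> hom1 K B C \<Longrightarrow>
        \<alpha> \<in> hom2 K f' f \<Longrightarrow> \<alpha>' \<in> hom2 K f'' f' \<Longrightarrow> \<beta> \<in> hom2 K g' g \<Longrightarrow> \<beta>' \<in> hom2 K g'' g' \<Longrightarrow>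
        hc K (vc K \<beta> \<beta>') (vc K \<alpha> \<alpha>') = vc K (hc K \<beta> \<alpha>) (hc K \<beta>' \<alpha>')"
      by (rule interchange)
  qed
qed


lemma pre_co: assumes "pre_functor K K' Fo F1 F2" shows "pre_functor (co K) (co K') Fo F1 F2"
  using assms unfolding pre_functor_def co_sel hom1_co hom2_co by blast

lemma lax_co: assumes L: "lax_functor K K' Fo F1 F2 L2 L0"
  shows "colax_functor (co K) (co K') Fo F1 F2 L2 L0"
proof -
  have P: "pre_functor K K' Fo F1 F2" using L unfolding lax_functor_def by blast
  show ?thesis using L pre_co[OF P] unfolding colax_functor_def lax_functor_def co_sel hom1_co hom2_co
    by (elim conjE) (intro conjI; blast)
qed

lemma monad_co: "comonad2 (co K) A b \<mu> \<eta> = monad2 K A b \<mu> \<eta>"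
  unfolding comonad2_def monad2_def co_sel hom1_co hom2_co endo_co by auto

lemma comodule_co: "left_comodule (co K) A d \<mu> \<eta> x \<rho> = left_module K A d \<mu> \<eta> x \<rho>"
  unfolding left_comodule_def left_module_def co_sel hom1_co hom2_co by auto

lemma laxnat_co:
  assumes SK: "strict_2cat K" and SK': "strict_2cat K'"
   and N: "lax_nat K K' Fo F1 F2 FL2 FL0 Go G1 G2 GL2 GL0 \<psi>0 \<psi>1"
  shows "colax_nat (co K) (co K') Fo F1 F2 FL2 FL0 Go G1 G2 GL2 GL0 \<psi>0 \<psi>1"
proof -
  have LF: "lax_functor K K' Fo F1 F2 FL2 FL0"
    using N unfolding lax_nat_def by (elim conjE) assumption
  have LG: "lax_functor K K' Go G1 G2 GL2 GL0"
    using N unfolding lax_nat_def by (elim conjE) assumption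
  have n1: "\<forall>A \<in> Ob K. \<psi>0 A \<in> hom1 K' (Fo A) (Go A)"
    using N unfolding lax_nat_def by (elim conjE) assumption
  have n2: "\<forall>A B f. f \<in> hom1 K A B \<longrightarrow>
        \<psi>1 f \<in> hom2 K' (cmp K' (G1 f) (\<psi>0 A)) (cmp K' (\<psi>0 B) (F1 f))"
    using N unfolding lax_nat_def by (elim conjE) assumption
  have n3: "\<forall>A B f f' \<alpha>. f \<in> hom1 K A B \<longrightarrow> f' \<in> hom1 K A B \<longrightarrow> \<alpha> \<in> hom2 K f f' \<longrightarrow>
        vc K' (hc K' (id2 K' (\<psi>0 B)) (F2 \<alpha>)) (\<psi>1 f) = vc K' (\<psi>1 f') (hc K' (G2 \<alpha>) (id2 K' (\<psi>0 A)))"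
    using N unfolding lax_nat_def by (elim conjE) assumption
  have n4: "\<forall>A B C f g. f \<in> hom1 K A B \<longrightarrow> g \<in> hom1 K B C \<longrightarrow>
        vc K' (\<psi>1 (cmp K g f)) (hc K' (GL2 g f) (id2 K' (\<psi>0 A)))
      = vc K' (hc K' (id2 K' (\<psi>0 C)) (FL2 g f))
          (vc K' (hc K' (\<psi>1 g) (id2 K' (F1 f))) (hc K' (id2 K' (G1 g)) (\<psi>1 f)))"
    using N unfolding lax_nat_def by (elim conjE) assumption
  have n5: "\<forall>A \<in> Ob K. vc K' (\<psi>1 (idn K A)) (hc K' (GL0 A) (id2 K' (\<psi>0 A)))
        = hc K' (id2 K' (\<psi>0 A)) (FL0 A)"
    using N unfolding lax_nat_def by (elim conjE) assumption
  interpret F: lax K K' Fo F1 F2 FL2 FL0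
    using SK SK' LF by (simp add: lax_def pre_def s2_def lax_axioms_def pre_axioms_def lax_functor_def)
  interpret G: lax K K' Go G1 G2 GL2 GL0
    using SK SK' LG by (simp add: lax_def pre_def s2_def lax_axioms_def pre_axioms_def lax_functor_def)
  have comp: "vc K' (vc K' (hc K' (id2 K' (\<psi>0 C)) (FL2 g f)) (hc K' (\<psi>1 g) (id2 K' (F1 f)))) (hc K' (id2 K' (G1 g)) (\<psi>1 f))
     = vc K' (\<psi>1 (cmp K g f)) (hc K' (GL2 g f) (id2 K' (\<psi>0 A)))"
    if f: "f \<in> hom1 K A B" and g: "g \<in> hom1 K B C" for A B C f g
  proof -
    have fa: "f \<in> Ar K" "src K f = A" "trg K f = B" "g \<in> Ar K" "src K g = B" "trg K g = C"
      using f g by (auto simp: hom1_def)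
    have A: "A \<in> Ob K" "B \<in> Ob K" "C \<in> Ob K" using fa F.K.ar_src F.K.ar_trg by metis+
    have xs: "\<psi>0 A \<in> Ar K'" "src K' (\<psi>0 A) = Fo A" "trg K' (\<psi>0 A) = Go A"
       "\<psi>0 B \<in> Ar K'" "src K' (\<psi>0 B) = Fo B" "trg K' (\<psi>0 B) = Go B"
       "\<psi>0 C \<in> Ar K'" "src K' (\<psi>0 C) = Fo C" "trg K' (\<psi>0 C) = Go C"
      using n1 A by (auto simp: hom1_def)
    have ps: "\<psi>1 f \<in> Ce K'" "dom2 K' (\<psi>1 f) = cmp K' (G1 f) (\<psi>0 A)" "cod2 K' (\<psi>1 f) = cmp K' (\<psi>0 B) (F1 f)"
       "\<psi>1 g \<in> Ce K'" "dom2 K' (\<psi>1 g) = cmp K' (G1 g) (\<psi>0 B)" "cod2 K' (\<psi>1 g) = cmp K' (\<psi>0 C) (F1 g)"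
      using n2[rule_format, OF f] n2[rule_format, OF g] by (auto simp: hom2_def)
    note at[simp] = fa A xs ps
    show ?thesis using n4[rule_format, OF f g] by simp
  qed
  show ?thesis unfolding colax_nat_def co_sel hom1_co hom2_co
  proof (intro conjI allI impI ballI)
    show "colax_functor (co K) (co K') Fo F1 F2 FL2 FL0" by (rule lax_co[OF LF])
    show "colax_functor (co K) (co K') Go G1 G2 GL2 GL0" by (rule lax_co[OF LG])
  qed (use n1 n2 n3 n5 comp in auto)
qed




theorem proposition4p13:
  fixes K :: "('o,'a,'c) cat2" and K' :: "('p,'b,'d) cat2"
  assumes "strict_2cat K" and "strict_2cat K'" and "yb_operator K c"
    and "bilax_functor K c K' Fo F1 F2 FL2 FL0 FC2 FC0 \<nu>F"
    and "bilax_functor K c K' Go G1 G2 GL2 GL0 GC2 GC0 \<nu>G"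
    and "c_bimonad K c A b \<mu> \<eta> \<Delta> \<epsilon>"
  shows
    "(colax_nat K K' Fo F1 F2 FC2 FC0 Go G1 G2 GC2 GC0 \<phi>0 \<phi>1 \<longrightarrow>
       comonad2 K' (Go A) (G1 b) (vc K' (GC2 b b) (G2 \<Delta>)) (vc K' (GC0 A) (G2 \<epsilon>)) \<and>
       left_comodule K' (Go A) (G1 b) (vc K' (GC2 b b) (G2 \<Delta>)) (vc K' (GC0 A) (G2 \<epsilon>)) (\<phi>0 A)
         (vc K' (hc K' (G2 \<eta>) (id2 K' (\<phi>0 A)))
            (vc K' (\<phi>1 (idn K A)) (hc K' (id2 K' (\<phi>0 A)) (FL0 A))))) \<and>
     (lax_nat K K' Fo F1 F2 FL2 FL0 Go G1 G2 GL2 GL0 \<psi>0 \<psi>1 \<longrightarrow>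
       monad2 K' (Go A) (G1 b) (vc K' (G2 \<mu>) (GL2 b b)) (vc K' (G2 \<eta>) (GL0 A)) \<and>
       left_module K' (Go A) (G1 b) (vc K' (G2 \<mu>) (GL2 b b)) (vc K' (G2 \<eta>) (GL0 A)) (\<psi>0 A)
         (vc K' (hc K' (id2 K' (\<psi>0 A)) (FC0 A))
            (vc K' (\<psi>1 (idn K A)) (hc K' (G2 \<epsilon>) (id2 K' (\<psi>0 A))))))"
proof -
  note SK = assms(1) and SK' = assms(2) and BF = assms(4) and BG = assms(5) and BM = assms(6)
  have Mon: "monad2 K A b \<mu> \<eta>" using BM unfolding c_bimonad_def by blast
  have Com: "comonad2 K A b \<Delta> \<epsilon>" using BM unfolding c_bimonad_def by blast
  have eps_eta: "vc K \<epsilon> \<eta> = id2 K (idn K A)" using BM unfolding c_bimonad_def Let_def by blast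
  have ee2: "hc K \<epsilon> \<epsilon> = vc K \<epsilon> \<mu>" using BM unfolding c_bimonad_def Let_def by blast
  have dd2: "hc K \<eta> \<eta> = vc K \<Delta> \<eta>" using BM unfolding c_bimonad_def Let_def by blast
  have A: "A \<in> Ob K" using Mon unfolding monad2_def by blast
  have eta: "\<eta> \<in> hom2 K (idn K A) b" using Mon unfolding monad2_def by blast
  have eps: "\<epsilon> \<in> hom2 K b (idn K A)" using Com unfolding comonad2_def by blast
  have LFF: "lax_functor K K' Fo F1 F2 FL2 FL0" using BF unfolding bilax_functor_def by blast
  have CFF: "colax_functor K K' Fo F1 F2 FC2 FC0" using BF unfolding bilax_functor_def by blast
  have LGG: "lax_functor K K' Go G1 G2 GL2 GL0" using BG unfolding bilax_functor_def by blast
  have bl: "\<forall>A \<in> Ob K.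
        hc K' (FL0 A) (FL0 A) = vc K' (FC2 (idn K A) (idn K A)) (FL0 A) \<and>
        hc K' (FC0 A) (FC0 A) = vc K' (FC0 A) (FL2 (idn K A) (idn K A)) \<and>
        vc K' (FC0 A) (FL0 A) = id2 K' (idn K' (Fo A))"
    using BF unfolding bilax_functor_def by (elim conjE) assumption
  have b1: "hc K' (FL0 A) (FL0 A) = vc K' (FC2 (idn K A) (idn K A)) (FL0 A)"
   and b1': "hc K' (FC0 A) (FC0 A) = vc K' (FC0 A) (FL2 (idn K A) (idn K A))"
   and b2: "vc K' (FC0 A) (FL0 A) = id2 K' (idn K' (Fo A))" using bl A by blast+
  have L0t: "FL0 A \<in> hom2 K' (idn K' (Fo A)) (F1 (idn K A))"
    using LFF A unfolding lax_functor_def by blast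
  have C0t: "FC0 A \<in> hom2 K' (F1 (idn K A)) (idn K' (Fo A))"
    using CFF A unfolding colax_functor_def by blast
  show ?thesis
  proof (intro conjI impI)
    assume N: "colax_nat K K' Fo F1 F2 FC2 FC0 Go G1 G2 GC2 GC0 \<phi>0 \<phi>1"
    have R: "comonad2 K' (Go A) (G1 b) (vc K' (GC2 b b) (G2 \<Delta>)) (vc K' (GC0 A) (G2 \<epsilon>)) \<and>
       left_comodule K' (Go A) (G1 b) (vc K' (GC2 b b) (G2 \<Delta>)) (vc K' (GC0 A) (G2 \<epsilon>)) (\<phi>0 A)
         (vc K' (hc K' (G2 \<eta>) (id2 K' (\<phi>0 A)))
            (vc K' (\<phi>1 (idn K A)) (hc K' (id2 K' (\<phi>0 A)) (FL0 A))))"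
      by (rule comodule_main[where ?FL0.0=FL0, OF SK SK' N Com eta dd2[symmetric] eps_eta L0t b1 b2])
    then show "comonad2 K' (Go A) (G1 b) (vc K' (GC2 b b) (G2 \<Delta>)) (vc K' (GC0 A) (G2 \<epsilon>))" by blast
    from R show "left_comodule K' (Go A) (G1 b) (vc K' (GC2 b b) (G2 \<Delta>)) (vc K' (GC0 A) (G2 \<epsilon>)) (\<phi>0 A)
         (vc K' (hc K' (G2 \<eta>) (id2 K' (\<phi>0 A)))
            (vc K' (\<phi>1 (idn K A)) (hc K' (id2 K' (\<phi>0 A)) (FL0 A))))" by blast
  next
    assume N: "lax_nat K K' Fo F1 F2 FL2 FL0 Go G1 G2 GL2 GL0 \<psi>0 \<psi>1"
    have R: "comonad2 (co K') (Go A) (G1 b) (vc (co K') (GL2 b b) (G2 \<mu>)) (vc (co K') (GL0 A) (G2 \<eta>)) \<and>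
       left_comodule (co K') (Go A) (G1 b) (vc (co K') (GL2 b b) (G2 \<mu>)) (vc (co K') (GL0 A) (G2 \<eta>)) (\<psi>0 A)
         (vc (co K') (hc (co K') (G2 \<epsilon>) (id2 (co K') (\<psi>0 A)))
            (vc (co K') (\<psi>1 (idn (co K) A)) (hc (co K') (id2 (co K') (\<psi>0 A)) (FC0 A))))"
      apply (rule comodule_main[where ?FL0.0=FC0 and \<eta>=\<epsilon> and \<Delta>=\<mu> and \<epsilon>=\<eta> and A=A and b=b, OF strict_co[OF SK] strict_co[OF SK'] laxnat_co[OF SK SK' N]])
      using Mon eps ee2 eps_eta C0t b1' b2 by (simp_all add: monad_co)
    interpret s2 K' by (rule s2.intro[OF SK'])
    interpret G: lax K K' Go G1 G2 GL2 GL0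
      using SK SK' LGG by (simp add: lax_def pre_def s2_def lax_axioms_def pre_axioms_def lax_functor_def)
    interpret F: colax K K' Fo F1 F2 FC2 FC0
      using SK SK' CFF by (simp add: colax_def pre_def s2_def colax_axioms_def pre_axioms_def colax_functor_def)
    have n1: "\<forall>A \<in> Ob K. \<psi>0 A \<in> hom1 K' (Fo A) (Go A)"
      using N unfolding lax_nat_def by (elim conjE) assumption
    have n2: "\<forall>A B f. f \<in> hom1 K A B \<longrightarrow>
        \<psi>1 f \<in> hom2 K' (cmp K' (G1 f) (\<psi>0 A)) (cmp K' (\<psi>0 B) (F1 f))"
      using N unfolding lax_nat_def by (elim conjE) assumption
    have bb: "b \<in> Ar K" "src K b = A" "trg K b = A"
      using Mon unfolding monad2_def endo_def hom1_def by auto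
    have at: "\<psi>0 A \<in> Ar K'" "src K' (\<psi>0 A) = Fo A" "trg K' (\<psi>0 A) = Go A"
      "\<psi>1 (idn K A) \<in> Ce K'" "dom2 K' (\<psi>1 (idn K A)) = cmp K' (G1 (idn K A)) (\<psi>0 A)"
      "cod2 K' (\<psi>1 (idn K A)) = cmp K' (\<psi>0 A) (F1 (idn K A))"
      "\<epsilon> \<in> Ce K" "dom2 K \<epsilon> = b" "cod2 K \<epsilon> = idn K A"
      using n1 A n2[rule_format, of "idn K A" A A] eps by (auto simp: hom1_def hom2_def)
    have asc: "vc K' (vc K' (hc K' (id2 K' (\<psi>0 A)) (FC0 A)) (\<psi>1 (idn K A))) (hc K' (G2 \<epsilon>) (id2 K' (\<psi>0 A)))
       = vc K' (hc K' (id2 K' (\<psi>0 A)) (FC0 A)) (vc K' (\<psi>1 (idn K A)) (hc K' (G2 \<epsilon>) (id2 K' (\<psi>0 A))))"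
      using at A bb by simp
    from R show "monad2 K' (Go A) (G1 b) (vc K' (G2 \<mu>) (GL2 b b)) (vc K' (G2 \<eta>) (GL0 A))"
      by (simp add: monad_co)
    from R show "left_module K' (Go A) (G1 b) (vc K' (G2 \<mu>) (GL2 b b)) (vc K' (G2 \<eta>) (GL0 A)) (\<psi>0 A)
         (vc K' (hc K' (id2 K' (\<psi>0 A)) (FC0 A))
            (vc K' (\<psi>1 (idn K A)) (hc K' (G2 \<epsilon>) (id2 K' (\<psi>0 A)))))"
      by (simp add: comodule_co asc[symmetric])
  qed
qed


end
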